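(* Let $N\ge2$, $m\ge3$ be integers and $0<K<N$. Then $\mathrm{PW}_{2K}(\mathcal{B}_N\square\,\mathcal{C}_m)$ is the orthogonal direct sum of the spaces (i) $\mathrm{PW}_{2K-4}(\mathcal{B}_N)\otimes\ell^2(\mathcal{C}_m)$, (ii) $\Lambda_{2K-2}(\mathcal{B}_N)\otimes\mathrm{PW}_2(\mathcal{C}_m)$, and (iii) $\Lambda_{2K}(\mathcal{B}_N)\otimes\Lambda_0(\mathcal{C}_m)$. Moreover: 1. The space (i) has dimension $m\sum_{\kappa=0}^{K-2}\binom{N}{\kappa}$. An orthonormal basis of it consists of the vectors $(u,\ell)\mapsto\delta_0(\ell-j)\psi_{\kappa,\nu}(u)$, $j\in\mathbb{Z}_m$, $0\le\kappa\le K-2$, $1\le\nu\le\binom{N}{\kappa}$. For every $f$ in this space, with $\Psi_{\kappa,\nu}(u,\ell)=\delta_0(\ell)\psi_{\kappa,\nu}(u)$, $\|Qf\|^2=\sum_{\kappa=0}^{K-2}\sum_{\nu=1}^{\binom{N}{\kappa}}|\langle Qf,\Psi_{\kappa,\nu}\rangle|^2.$ 2. Suppose $m=4m'+1$ with $m'$ a positive integer. The space (ii) has dimension $\lfloor(m+1)/2\rfloor\binom{N}{K-1}$, and a basis of it consists of the vectors $(u,\ell)\mapsto\bar{D}_{m'}(\ell-2j)\psi_{K-1,\nu}(u)$, $j=0,\dots,(m-1)/2$, $\nu=1,\dots,\binom{N}{K-1}$. For every $f$ in this space, with $\Psi_{K-1,\nu}(u,\ell)=\bar{D}_{m'}(\ell)\psi_{K-1,\nu}(u)$,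 $\left(\tfrac12+\tfrac{1}{2m}\right)\|Qf\|^2=\sum_{\nu=1}^{\binom{N}{K-1}}|\langle Qf,\Psi_{K-1,\nu}\rangle|^2.$ 3. The space (iii) has dimension $\binom{N}{K}$, and an orthonormal basis of it consists of $\Psi_{K,\nu}(u,\ell)=\frac{1}{\sqrt m}\psi_{K,\nu}(u)$, $\nu=1,\dots,\binom{N}{K}$. For every $f$ in this space, $\tfrac1m\|Qf\|^2=\sum_{\nu=1}^{\binom{N}{K}}|\langle Qf,\Psi_{K,\nu}\rangle|^2.$
   Context: For a finite simple undirected graph $\mathcal{G}$, $L(\mathcal{G})$ is the unnormalized Laplacian $(Lf)(v)=\sum_{w\sim v}[f(v)-f(w)]$, $\Lambda_\lambda(\mathcal{G})$ is the $\lambda$-eigenspace of $L(\mathcal{G})$ (the zero space if $\lambda$ is not an eigenvalue), and $\mathrm{PW}_\lambda(\mathcal{G})$ is the span of the eigenvectors of $L(\mathcal{G})$ with eigenvalue at most $\lambda$ (the zero space if $\lambda<0$). The cycle $\mathcal{C}_m$ has vertex set $\mathbb{Z}_m$ with $\ell\sim\ell\pm1$; its eigenvectors are $\ell\mapsto e^{2\pi ik\ell/m}$ with eigenvalues $4\sin^2(\pi k/m)$. The Boolean cube $\mathcal{B}_N$ has vertex set $\mathbb{Z}_2^N$ with $v\sim w$ iff $v-w=e_i$ for a standard basis vector $e_i$; its eigenvalues are $2\kappa$ with multiplicity $\binom{N}{\kappa}$, $\kappa=0,\dots,N$. For each $\kappa$, $\{\psi_{\kappa,\nu}\}_{\nu=1}^{\binom{N}{\kappa}}$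 is an orthonormal basis of $\Lambda_{2\kappa}(\mathcal{B}_N)$. The Cartesian product $\mathcal{B}_N\square\,\mathcal{C}_m$ has vertex set $\mathbb{Z}_2^N\times\mathbb{Z}_m$ with $(u_1,\ell_1)\sim(u_2,\ell_2)$ iff ($u_1\sim u_2$ and $\ell_1=\ell_2$) or ($u_1=u_2$ and $\ell_1\sim\ell_2$). For $g$ on $\mathcal{B}_N$ and $h$ on $\mathcal{C}_m$, $(g\otimes h)(u,\ell)=g(u)h(\ell)$, and $V\otimes W$ is the span of such products. $Q$ is the operator $(Qf)(u,\ell)=f(u,\ell)$ if $\ell=0$ and $0$ otherwise. $\delta_0(\ell)=1$ if $\ell=0$ and $0$ otherwise. For $n\ge0$, $D_n(\ell)=\sum_{k=-n}^n e^{2\pi ik\ell/m}$ and $\bar{D}_n=D_n/\sqrt{m(2n+1)}$ (unit norm in $\ell^2(\mathcal{C}_m)$). Inner products and norms are the standard ones on $\ell^2$ of the vertex set. *)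

theory Defs
  imports "HOL-Analysis.Analysis" "HOL-Library.Function_Algebras"
begin

definition fscale :: "complex \<Rightarrow> ('v \<Rightarrow> complex) \<Rightarrow> ('v \<Rightarrow> complex)" where
  "fscale c f = (\<lambda>x. c * f x)"

abbreviation cspan :: "('v \<Rightarrow> complex) set \<Rightarrow> ('v \<Rightarrow> complex) set" where
  "cspan S \<equiv> module.span fscale S"

abbreviation cdim :: "('v \<Rightarrow> complex) set \<Rightarrow> nat" where
  "cdim S \<equiv> vector_space.dim fscale S"

definition l2 :: "'v set \<Rightarrow> ('v \<Rightarrow> complex) set" where
  "l2 V = {f. \<forall>x. x \<notin> V \<longrightarrow> f x = 0}"

definition inner_l2 :: "'v set \<Rightarrow> ('v \<Rightarrow> complex) \<Rightarrow> ('v \<Rightarrow> complex) \<Rightarrow> complex" where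
  "inner_l2 V f g = (\<Sum>x\<in>V. f x * cnj (g x))"

definition norm2_l2 :: "'v set \<Rightarrow> ('v \<Rightarrow> complex) \<Rightarrow> real" where
  "norm2_l2 V f = (\<Sum>x\<in>V. (cmod (f x))^2)"

definition is_onb :: "'v set \<Rightarrow> ('v \<Rightarrow> complex) set \<Rightarrow> ('i \<Rightarrow> 'v \<Rightarrow> complex) \<Rightarrow> 'i set \<Rightarrow> bool" where
  "is_onb V S b I \<longleftrightarrow>
     (\<forall>i\<in>I. \<forall>j\<in>I. inner_l2 V (b i) (b j) = (if i = j then 1 else 0)) \<and> cspan (b ` I) = S"

definition is_basis :: "('v \<Rightarrow> complex) set \<Rightarrow> ('i \<Rightarrow> 'v \<Rightarrow> complex) \<Rightarrow> 'i set \<Rightarrow> bool" where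
  "is_basis S b I \<longleftrightarrow>
     (\<forall>c. (\<Sum>i\<in>I. fscale (c i) (b i)) = 0 \<longrightarrow> (\<forall>i\<in>I. c i = 0)) \<and> cspan (b ` I) = S"

definition Lap :: "'v set \<Rightarrow> ('v \<Rightarrow> 'v \<Rightarrow> bool) \<Rightarrow> ('v \<Rightarrow> complex) \<Rightarrow> ('v \<Rightarrow> complex)" where
  "Lap V E f = (\<lambda>v. if v \<in> V then (\<Sum>w\<in>{w\<in>V. E v w}. f v - f w) else 0)"

definition eigsp :: "'v set \<Rightarrow> ('v \<Rightarrow> 'v \<Rightarrow> bool) \<Rightarrow> real \<Rightarrow> ('v \<Rightarrow> complex) set" where
  "eigsp V E lam = {f \<in> l2 V. Lap V E f = fscale (complex_of_real lam) f}"

definition PW :: "'v set \<Rightarrow> ('v \<Rightarrow> 'v \<Rightarrow> bool) \<Rightarrow> real \<Rightarrow> ('v \<Rightarrow> complex) set" where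
  "PW V E lam = cspan {f \<in> l2 V. f \<noteq> 0 \<and> (\<exists>mu::real. mu \<le> lam \<and> Lap V E f = fscale (complex_of_real mu) f)}"

text \<open>Boolean cube B_N: vertices are the elements of Z_2^N, encoded as bool vectors
  v :: nat => bool with v i = False for i >= N; v ~ w iff v - w = e_i, i.e. they differ exactly in one coordinate i < N.\<close>
definition cubeV :: "nat \<Rightarrow> (nat \<Rightarrow> bool) set" where
  "cubeV N = {v. \<forall>i. N \<le> i \<longrightarrow> \<not> v i}"

definition cubeE :: "nat \<Rightarrow> (nat \<Rightarrow> bool) \<Rightarrow> (nat \<Rightarrow> bool) \<Rightarrow> bool" where
  "cubeE N v w \<longleftrightarrow> (\<exists>i<N. \<forall>j. (v j \<noteq> w j) \<longleftrightarrow> j = i)"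

definition cycV :: "nat \<Rightarrow> int set" where
  "cycV m = {0..<int m}"

definition cycE :: "nat \<Rightarrow> int \<Rightarrow> int \<Rightarrow> bool" where
  "cycE m a b \<longleftrightarrow> (a - b) mod int m = 1 \<or> (b - a) mod int m = 1"

definition prodV :: "'a set \<Rightarrow> 'b set \<Rightarrow> ('a \<times> 'b) set" where
  "prodV V1 V2 = V1 \<times> V2"

definition prodE :: "('a \<Rightarrow> 'a \<Rightarrow> bool) \<Rightarrow> ('b \<Rightarrow> 'b \<Rightarrow> bool) \<Rightarrow> ('a \<times> 'b) \<Rightarrow> ('a \<times> 'b) \<Rightarrow> bool" where
  "prodE E1 E2 x y \<longleftrightarrow> (E1 (fst x) (fst y) \<and> snd x = snd y) \<or> (fst x = fst y \<and> E2 (snd x) (snd y))"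

definition tens :: "('a \<Rightarrow> complex) set \<Rightarrow> ('b \<Rightarrow> complex) set \<Rightarrow> ('a \<times> 'b \<Rightarrow> complex) set" where
  "tens A B = cspan {(\<lambda>(u, l). g u * h l) | g h. g \<in> A \<and> h \<in> B}"

definition Qop :: "('a \<times> int \<Rightarrow> complex) \<Rightarrow> ('a \<times> int \<Rightarrow> complex)" where
  "Qop f = (\<lambda>(u, l). if l = 0 then f (u, l) else 0)"

definition delta0 :: "int \<Rightarrow> complex" where
  "delta0 l = (if l = 0 then 1 else 0)"

definition Dir :: "nat \<Rightarrow> nat \<Rightarrow> int \<Rightarrow> complex" where
  "Dir m n l = (\<Sum>k\<in>{-int n..int n}. exp (2 * pi * \<i> * of_int k * of_int l / of_nat m))"

definition Dbar :: "nat \<Rightarrow> nat \<Rightarrow> int \<Rightarrow> complex" where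
  "Dbar m n l = Dir m n l / complex_of_real (sqrt (real m * (2 * real n + 1)))"

end

theory Submission
  imports Defs "HOL-Computational_Algebra.Polynomial"
begin

interpretation cv: vector_space "fscale :: complex \<Rightarrow> ('v \<Rightarrow> complex) \<Rightarrow> _"
  by unfold_locales (auto simp: fscale_def fun_eq_iff algebra_simps)

definition lc :: "('i \<Rightarrow> complex) \<Rightarrow> ('i \<Rightarrow> 'v \<Rightarrow> complex) \<Rightarrow> 'i set \<Rightarrow> 'v \<Rightarrow> complex" where
  "lc c b I = (\<lambda>x. \<Sum>i\<in>I. c i * b i x)"

lemma sum_fun_apply': "(\<Sum>i\<in>I. (f i :: 'v \<Rightarrow> complex)) x = (\<Sum>i\<in>I. f i x)"
  by (induction I rule: infinite_finite_induct) auto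

lemma sum_fscale: "(\<Sum>i\<in>I. fscale (c i) (b i)) = lc c b I"
  by (auto simp: fun_eq_iff sum_fun_apply' lc_def fscale_def)

lemma if01_mult [simp]: "(if P then 1 else 0) * (y::complex) = (if P then y else 0)" by simp

lemma z_cnj_sq: "z * cnj z = (complex_of_real (cmod z))^2"
  by (metis complex_norm_square of_real_power)

lemma lc_in_span: "finite I \<Longrightarrow> lc c b I \<in> cv.span (b ` I)"
  unfolding sum_fscale[symmetric]
  by (intro cv.span_sum cv.span_scale cv.span_base) auto

lemma span_image: "finite I \<Longrightarrow> cv.span (b ` I) = range (\<lambda>c. lc c b I)"
proof
  assume fin: "finite I"
  show "range (\<lambda>c. lc c b I) \<subseteq> cv.span (b ` I)" using lc_in_span[OF fin] by auto
  have sub: "cv.subspace (range (\<lambda>c. lc c b I))"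
    unfolding cv.subspace_def
  proof (intro conjI ballI allI)
    show "0 \<in> range (\<lambda>c. lc c b I)"
      by (rule range_eqI[of _ _ "\<lambda>_. 0"]) (auto simp: lc_def fun_eq_iff)
    fix x y assume "x \<in> range (\<lambda>c. lc c b I)" "y \<in> range (\<lambda>c. lc c b I)"
    then obtain c d where "x = lc c b I" "y = lc d b I" by auto
    then show "x + y \<in> range (\<lambda>c. lc c b I)"
      by (intro range_eqI[of _ _ "\<lambda>i. c i + d i"]) (auto simp: lc_def fun_eq_iff sum.distrib algebra_simps)
  next
    fix a x assume "x \<in> range (\<lambda>c. lc c b I)"
    then obtain c where "x = lc c b I" by auto
    then show "fscale a x \<in> range (\<lambda>c. lc c b I)"
      by (intro range_eqI[of _ _ "\<lambda>i. a * c i"]) (auto simp: lc_def fun_eq_iff fscale_def sum_distrib_left algebra_simps)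
  qed
  have "b ` I \<subseteq> range (\<lambda>c. lc c b I)"
  proof
    fix x assume "x \<in> b ` I"
    then obtain i where i: "i \<in> I" "x = b i" by auto
    have "lc (\<lambda>j. if j = i then 1 else 0) b I = b i"
      using i fin by (auto simp: lc_def fun_eq_iff)
    then show "x \<in> range (\<lambda>c. lc c b I)" using i by (metis rangeI)
  qed
  then show "cv.span (b ` I) \<subseteq> range (\<lambda>c. lc c b I)"
    using cv.span_minimal sub by blast
qed

lemma (in vector_space) indep_spans:
  assumes "finite W" "V \<subseteq> span W" "B \<subseteq> V" "independent B" "finite B" "card W \<le> card B"
  shows "V \<subseteq> span B"
proof
  fix a assume aV: "a \<in> V"
  show "a \<in> span B"
  proof (rule ccontr)
    assume aB: "a \<notin> span B"
    then have "independent (insert a B)" using assms(4) by (simp add: independent_insert)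
    moreover have "insert a B \<subseteq> span W" using assms aV by auto
    ultimately have "card (insert a B) \<le> card W" using independent_span_bound[OF assms(1)] by blast
    moreover have "a \<notin> B" using aB span_base by blast
    ultimately show False using assms(5,6) by simp
  qed
qed

definition orthon :: "'v set \<Rightarrow> ('i \<Rightarrow> 'v \<Rightarrow> complex) \<Rightarrow> 'i set \<Rightarrow> bool" where
  "orthon V b I \<longleftrightarrow> (\<forall>i\<in>I. \<forall>j\<in>I. inner_l2 V (b i) (b j) = (if i = j then 1 else 0))"

lemma inner_lc_left: "finite I \<Longrightarrow> inner_l2 V (lc c b I) g = (\<Sum>i\<in>I. c i * inner_l2 V (b i) g)"
  by (auto simp: inner_l2_def lc_def sum_distrib_left sum_distrib_right mult.assoc intro: sum.swap)

lemma inner_lc_right: "finite I \<Longrightarrow> inner_l2 V g (lc c b I) = (\<Sum>i\<in>I. cnj (c i) * inner_l2 V g (b i))"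
  by (auto simp: inner_l2_def lc_def sum_distrib_left sum_distrib_right algebra_simps intro: sum.swap)

lemma inner_cnj: "inner_l2 V g f = cnj (inner_l2 V f g)"
  by (simp add: inner_l2_def mult.commute)

lemma inner_fscale_left: "inner_l2 V (fscale a f) g = a * inner_l2 V f g"
  by (simp add: inner_l2_def fscale_def sum_distrib_left mult.assoc)

lemma inner_fscale_right: "inner_l2 V f (fscale a g) = cnj a * inner_l2 V f g"
  by (simp add: inner_l2_def fscale_def sum_distrib_left algebra_simps)

lemma inner_self_norm2: "inner_l2 V f f = complex_of_real (norm2_l2 V f)"
  by (simp add: inner_l2_def norm2_l2_def complex_norm_square[symmetric])

lemma orthon_coeff:
  assumes "finite I" "orthon V b I" "j \<in> I"
  shows "inner_l2 V (lc c b I) (b j) = c j"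
proof -
  have "inner_l2 V (lc c b I) (b j) = (\<Sum>i\<in>I. c i * (if i = j then 1 else 0))"
    using assms by (auto simp: inner_lc_left orthon_def intro!: sum.cong)
  also have "\<dots> = c j" using assms by (simp add: if_distrib cong: if_cong)
  finally show ?thesis .
qed

lemma orthon_norm2:
  assumes "finite I" "orthon V b I"
  shows "norm2_l2 V (lc c b I) = (\<Sum>i\<in>I. (cmod (c i))^2)"
proof -
  have "complex_of_real (norm2_l2 V (lc c b I)) = inner_l2 V (lc c b I) (lc c b I)"
    by (simp add: inner_self_norm2)
  also have "\<dots> = (\<Sum>i\<in>I. cnj (c i) * c i)"
    using assms by (simp add: inner_lc_right orthon_coeff)
  also have "\<dots> = complex_of_real (\<Sum>i\<in>I. (cmod (c i))^2)"
    by (simp add: z_cnj_sq mult.commute)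
  finally show ?thesis by (simp only: of_real_eq_iff)
qed

lemma orthon_disjoint:
  assumes "finite I1" "finite I2" "orthon V b I" "I1 \<subseteq> I" "I2 \<subseteq> I" "I1 \<inter> I2 = {}"
  shows "inner_l2 V (lc c b I1) (lc d b I2) = 0"
proof -
  have "inner_l2 V (lc c b I1) (lc d b I2) = (\<Sum>i\<in>I1. c i * inner_l2 V (b i) (lc d b I2))"
    using assms by (simp add: inner_lc_left)
  also have "\<dots> = (\<Sum>i\<in>I1. c i * (\<Sum>j\<in>I2. cnj (d j) * inner_l2 V (b i) (b j)))"
    using assms by (simp add: inner_lc_right)
  also have "\<dots> = 0"
  proof -
    have "\<forall>i\<in>I1. \<forall>j\<in>I2. inner_l2 V (b i) (b j) = 0"
    proof (intro ballI)
      fix i j assume "i \<in> I1" "j \<in> I2"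
      then have "i \<noteq> j" "i \<in> I" "j \<in> I" using assms by auto
      then show "inner_l2 V (b i) (b j) = 0" using assms(3) unfolding orthon_def by auto
    qed
    then show ?thesis by simp
  qed
  finally show ?thesis .
qed

lemma orthon_inj:
  assumes "orthon V b I" shows "inj_on b I"
proof (rule inj_onI)
  fix i j assume "i \<in> I" "j \<in> I" "b i = b j"
  then have "inner_l2 V (b i) (b j) = 1" using assms by (metis orthon_def)
  then show "i = j" using assms \<open>i \<in> I\<close> \<open>j \<in> I\<close> unfolding orthon_def by (metis zero_neq_one)
qed

lemma orthon_nonzero:
  assumes "orthon V b I" "i \<in> I" shows "b i \<noteq> 0"
proof
  assume "b i = 0"
  then have "inner_l2 V (b i) (b i) = 0" by (simp add: inner_l2_def)
  then show False using assms unfolding orthon_def by auto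
qed

lemma orthon_lc_zero:
  assumes "finite I" "orthon V b I" "lc c b I = 0" "i \<in> I" shows "c i = 0"
  using orthon_coeff[OF assms(1,2,4), of c] assms(3) by (simp add: inner_l2_def)

lemma orthon_indep:
  assumes "finite I" "orthon V b I" shows "cv.independent (b ` I)"
proof (rule cv.independent_if_scalars_zero)
  show "finite (b ` I)" using assms by simp
  fix f x assume s: "(\<Sum>x\<in>b ` I. fscale (f x) x) = 0" and x: "x \<in> b ` I"
  have "(\<Sum>x\<in>b ` I. fscale (f x) x) = (\<Sum>i\<in>I. fscale (f (b i)) (b i))"
    using orthon_inj[OF assms(2)] by (simp add: sum.reindex)
  then have "lc (\<lambda>i. f (b i)) b I = 0" using s by (simp add: sum_fscale)
  then show "f x = 0" using x orthon_lc_zero[OF assms] by auto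
qed

lemma l2_subspace: "cv.subspace (l2 V)"
  by (auto simp: cv.subspace_def l2_def fscale_def)

lemma l2_span_delta:
  assumes "finite V"
  shows "l2 V \<subseteq> cv.span ((\<lambda>v x. if x = v then 1 else 0) ` V)"
proof
  fix f assume "f \<in> l2 V"
  then have "f = lc f (\<lambda>v x. if x = v then 1 else 0) V"
    using assms by (auto simp: lc_def fun_eq_iff l2_def if_distrib cong: if_cong)
  then show "f \<in> cv.span ((\<lambda>v x. if x = v then 1 else 0) ` V)"
    using lc_in_span[OF assms] by metis
qed

lemma orthon_span_l2:
  assumes "finite V" "finite I" "orthon V b I" "\<And>i. i \<in> I \<Longrightarrow> b i \<in> l2 V" "card V \<le> card I"
  shows "cv.span (b ` I) = l2 V"
proof
  show "cv.span (b ` I) \<subseteq> l2 V"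
    by (rule cv.span_minimal[OF _ l2_subspace]) (use assms(4) in auto)
  show "l2 V \<subseteq> cv.span (b ` I)"
  proof (rule cv.indep_spans[OF _ l2_span_delta[OF assms(1)]])
    show "finite ((\<lambda>v x. if x = v then 1 else (0::complex)) ` V)" using assms by simp
    show "b ` I \<subseteq> l2 V" using assms(4) by auto
    show "cv.independent (b ` I)" by (rule orthon_indep[OF assms(2,3)])
    show "finite (b ` I)" using assms by simp
    have "card ((\<lambda>v x. if x = v then 1 else (0::complex)) ` V) \<le> card V" by (rule card_image_le[OF assms(1)])
    also have "\<dots> \<le> card I" by fact
    also have "\<dots> = card (b ` I)" using orthon_inj[OF assms(3)] by (simp add: card_image)
    finally show "card ((\<lambda>v x. if x = v then 1 else (0::complex)) ` V) \<le> card (b ` I)" .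
  qed
qed

lemma span_lc_obtain:
  assumes "finite I" "f \<in> cv.span (b ` I)" obtains c where "f = lc c b I"
  using assms span_image[OF assms(1), of b] by auto

lemma orthon_expand:
  assumes "finite I" "orthon V b I" "f \<in> cv.span (b ` I)"
  shows "f = lc (\<lambda>i. inner_l2 V f (b i)) b I"
proof -
  obtain c where c: "f = lc c b I" using span_lc_obtain assms by blast
  then have "\<forall>i\<in>I. inner_l2 V f (b i) = c i" using orthon_coeff[OF assms(1,2)] by simp
  then show ?thesis using c by (simp add: lc_def)
qed

lemma Lap_alt: "v \<in> V \<Longrightarrow> finite V \<Longrightarrow> Lap V E f v = (\<Sum>w\<in>V. if E v w then f v - f w else 0)"
  by (simp add: Lap_def sum.inter_filter)

lemma Lap_selfadj:
  assumes fin: "finite V" and sym: "\<And>x y. E x y = E y x"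
  shows "inner_l2 V (Lap V E f) g = inner_l2 V f (Lap V E g)"
proof -
  define T1 where "T1 = (\<Sum>v\<in>V. \<Sum>w\<in>V. if E v w then f v * cnj (g v) else 0)"
  define T2 where "T2 = (\<Sum>v\<in>V. \<Sum>w\<in>V. if E v w then f w * cnj (g v) else 0)"
  define T3 where "T3 = (\<Sum>v\<in>V. \<Sum>w\<in>V. if E v w then f v * cnj (g w) else 0)"
  have L: "inner_l2 V (Lap V E f) g = T1 - T2"
  proof -
    have "inner_l2 V (Lap V E f) g = (\<Sum>v\<in>V. \<Sum>w\<in>V. (if E v w then f v * cnj (g v) else 0) - (if E v w then f w * cnj (g v) else 0))"
      unfolding inner_l2_def using fin
      by (intro sum.cong refl) (auto simp: Lap_alt sum_distrib_right intro!: sum.cong simp: left_diff_distrib)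
    then show ?thesis by (simp add: T1_def T2_def sum_subtractf)
  qed
  have R: "inner_l2 V f (Lap V E g) = T1 - T3"
  proof -
    have "inner_l2 V f (Lap V E g) = (\<Sum>v\<in>V. \<Sum>w\<in>V. (if E v w then f v * cnj (g v) else 0) - (if E v w then f v * cnj (g w) else 0))"
      unfolding inner_l2_def using fin
      by (intro sum.cong refl) (auto simp: Lap_alt sum_distrib_left intro!: sum.cong simp: right_diff_distrib)
    then show ?thesis by (simp add: T1_def T3_def sum_subtractf)
  qed
  have "T2 = T3" unfolding T2_def T3_def
    by (subst sum.swap) (simp add: sym)
  then show ?thesis using L R by simp
qed

lemma Lap_lc:
  assumes "finite I"
  shows "Lap V E (lc c b I) = lc c (\<lambda>i. Lap V E (b i)) I"
proof
  fix v
  show "Lap V E (lc c b I) v = lc c (\<lambda>i. Lap V E (b i)) I v"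
  proof (cases "v \<in> V")
    case True
    have "Lap V E (lc c b I) v = (\<Sum>w\<in>{w \<in> V. E v w}. \<Sum>i\<in>I. c i * (b i v - b i w))"
      using True by (simp add: Lap_def lc_def sum_subtractf[symmetric] right_diff_distrib)
    also have "\<dots> = (\<Sum>i\<in>I. c i * (\<Sum>w\<in>{w \<in> V. E v w}. (b i v - b i w)))"
      by (subst sum.swap) (simp add: sum_distrib_left)
    also have "\<dots> = lc c (\<lambda>i. Lap V E (b i)) I v"
      using True by (simp add: Lap_def lc_def)
    finally show ?thesis .
  qed (simp add: Lap_def lc_def)
qed

lemma eig_orth:
  assumes fin: "finite V" and sym: "\<And>x y. E x y = E y x"
    and f: "Lap V E f = fscale (complex_of_real mu) f"
    and g: "Lap V E g = fscale (complex_of_real la) g" and ne: "la \<noteq> mu"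
  shows "inner_l2 V f g = 0"
proof -
  have "complex_of_real mu * inner_l2 V f g = inner_l2 V (Lap V E f) g"
    by (simp add: f inner_fscale_left)
  also have "\<dots> = inner_l2 V f (Lap V E g)" by (rule Lap_selfadj[OF fin sym])
  also have "\<dots> = complex_of_real la * inner_l2 V f g"
    by (simp add: g inner_fscale_right)
  finally have "(complex_of_real mu - complex_of_real la) * inner_l2 V f g = 0"
    by (simp add: algebra_simps)
  then show ?thesis using ne by simp
qed

lemma spectral_eig_expand:
  assumes fin: "finite V" and sym: "\<And>x y. E x y = E y x" and finI: "finite I"
    and on: "orthon V b I" and sp: "cv.span (b ` I) = l2 V"
    and eig: "\<And>i. i \<in> I \<Longrightarrow> Lap V E (b i) = fscale (complex_of_real (lam i)) (b i)"
    and fl2: "f \<in> l2 V" and f: "Lap V E f = fscale (complex_of_real mu) f"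
  shows "f = lc (\<lambda>i. inner_l2 V f (b i)) b {i\<in>I. lam i = mu}"
proof -
  have "f = lc (\<lambda>i. inner_l2 V f (b i)) b I"
    using orthon_expand[OF finI on] fl2 sp by blast
  also have "\<dots> = lc (\<lambda>i. inner_l2 V f (b i)) b {i\<in>I. lam i = mu}"
  proof -
    have Z: "\<forall>i\<in>I - {i \<in> I. lam i = mu}. inner_l2 V f (b i) = 0"
      using eig_orth[OF fin sym f eig] by auto
    show ?thesis unfolding lc_def
      by (rule ext, rule sum.mono_neutral_right) (use finI Z in auto)
  qed
  finally show ?thesis .
qed

lemma spectral:
  assumes fin: "finite V" and sym: "\<And>x y. E x y = E y x" and finI: "finite I"
    and on: "orthon V b I" and sp: "cv.span (b ` I) = l2 V"
    and eig: "\<And>i. i \<in> I \<Longrightarrow> Lap V E (b i) = fscale (complex_of_real (lam i)) (b i)"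
  shows "PW V E la = cv.span (b ` {i\<in>I. lam i \<le> la})"
    and "eigsp V E mu = cv.span (b ` {i\<in>I. lam i = mu})"
proof -
  have bl2: "b i \<in> l2 V" if "i \<in> I" for i using sp that cv.span_base[of "b i" "b ` I"] by auto
  show "PW V E la = cv.span (b ` {i\<in>I. lam i \<le> la})"
  proof
    show "PW V E la \<subseteq> cv.span (b ` {i\<in>I. lam i \<le> la})"
      unfolding PW_def
    proof (rule cv.span_minimal[OF _ cv.subspace_span], rule subsetI)
      fix f assume "f \<in> {f \<in> l2 V. f \<noteq> 0 \<and> (\<exists>mu. mu \<le> la \<and> Lap V E f = fscale (complex_of_real mu) f)}"
      then obtain mu where f: "f \<in> l2 V" "mu \<le> la" "Lap V E f = fscale (complex_of_real mu) f" by auto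
      have "f = lc (\<lambda>i. inner_l2 V f (b i)) b {i\<in>I. lam i = mu}"
        by (rule spectral_eig_expand[OF fin sym finI on sp eig f(1,3)])
      also have "\<dots> \<in> cv.span (b ` {i\<in>I. lam i = mu})" by (rule lc_in_span) (use finI in auto)
      also have "\<dots> \<subseteq> cv.span (b ` {i\<in>I. lam i \<le> la})" by (rule cv.span_mono) (use f in auto)
      finally show "f \<in> cv.span (b ` {i\<in>I. lam i \<le> la})" .
    qed
    show "cv.span (b ` {i\<in>I. lam i \<le> la}) \<subseteq> PW V E la"
      unfolding PW_def
      by (rule cv.span_mono) (auto intro!: bl2 eig orthon_nonzero[OF on])
  qed
  show "eigsp V E mu = cv.span (b ` {i\<in>I. lam i = mu})"
  proof
    show "eigsp V E mu \<subseteq> cv.span (b ` {i\<in>I. lam i = mu})"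
    proof
      fix f assume "f \<in> eigsp V E mu"
      then have f: "f \<in> l2 V" "Lap V E f = fscale (complex_of_real mu) f" by (auto simp: eigsp_def)
      have "f = lc (\<lambda>i. inner_l2 V f (b i)) b {i\<in>I. lam i = mu}"
        by (rule spectral_eig_expand[OF fin sym finI on sp eig f(1,2)])
      also have "\<dots> \<in> cv.span (b ` {i\<in>I. lam i = mu})" by (rule lc_in_span) (use finI in auto)
      finally show "f \<in> cv.span (b ` {i\<in>I. lam i = mu})" .
    qed
    show "cv.span (b ` {i\<in>I. lam i = mu}) \<subseteq> eigsp V E mu"
    proof
      fix f assume fs: "f \<in> cv.span (b ` {i\<in>I. lam i = mu})"
      have finJ: "finite {i\<in>I. lam i = mu}" using finI by auto
      obtain c where c: "f = lc c b {i\<in>I. lam i = mu}" using span_lc_obtain[OF finJ fs] by blast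
      have "f \<in> cv.span (b ` I)" using fs cv.span_mono[of "b ` {i\<in>I. lam i = mu}" "b ` I"] by auto
      then have "f \<in> l2 V" using sp by simp
      moreover have "Lap V E f = fscale (complex_of_real mu) f"
      proof -
        have "Lap V E f = lc c (\<lambda>i. Lap V E (b i)) {i\<in>I. lam i = mu}"
          using c Lap_lc[OF finJ] by simp
        also have "\<dots> = lc c (\<lambda>i. fscale (complex_of_real mu) (b i)) {i\<in>I. lam i = mu}"
          unfolding lc_def using eig by (auto intro!: ext sum.cong)
        also have "\<dots> = fscale (complex_of_real mu) f"
          using c by (simp add: lc_def fscale_def fun_eq_iff sum_distrib_left algebra_simps)
        finally show ?thesis .
      qed
      ultimately show "f \<in> eigsp V E mu" by (simp add: eigsp_def)
    qed
  qed
qed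

definition tensor :: "('a \<Rightarrow> complex) \<Rightarrow> ('b \<Rightarrow> complex) \<Rightarrow> ('a \<times> 'b \<Rightarrow> complex)" where
  "tensor g h = (\<lambda>(u, l). g u * h l)"

lemma tensor_lc:
  assumes "finite I" "finite J"
  shows "tensor (lc c g I) (lc d h J) = lc (\<lambda>(i, j). c i * d j) (\<lambda>(i, j). tensor (g i) (h j)) (I \<times> J)"
proof -
  have "(\<Sum>i\<in>I. c i * g i u) * (\<Sum>j\<in>J. d j * h j l) = (\<Sum>(i, j)\<in>I \<times> J. (c i * d j) * (g i u * h j l))" for u l
    by (simp add: sum_product sum.cartesian_product[symmetric] algebra_simps)
  then show ?thesis by (auto simp: tensor_def lc_def fun_eq_iff case_prod_beta)
qed

lemma tens_span:
  assumes "finite I" "finite J"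
  shows "tens (cv.span (g ` I)) (cv.span (h ` J)) = cv.span ((\<lambda>(i, j). tensor (g i) (h j)) ` (I \<times> J))"
proof
  show "tens (cv.span (g ` I)) (cv.span (h ` J)) \<subseteq> cv.span ((\<lambda>(i, j). tensor (g i) (h j)) ` (I \<times> J))"
    unfolding tens_def
  proof (rule cv.span_minimal[OF _ cv.subspace_span], rule subsetI)
    fix x assume "x \<in> {\<lambda>(u, l). ga u * ha l |ga ha. ga \<in> cv.span (g ` I) \<and> ha \<in> cv.span (h ` J)}"
    then obtain ga ha where x: "x = tensor ga ha" and ga: "ga \<in> cv.span (g ` I)" and ha: "ha \<in> cv.span (h ` J)"
      by (auto simp: tensor_def)
    obtain c where c: "ga = lc c g I" using span_lc_obtain[OF assms(1) ga] by blast
    obtain d where d: "ha = lc d h J" using span_lc_obtain[OF assms(2) ha] by blast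
    have "x = lc (\<lambda>(i, j). c i * d j) (\<lambda>(i, j). tensor (g i) (h j)) (I \<times> J)"
      using x c d tensor_lc[OF assms] by simp
    also have "\<dots> \<in> cv.span ((\<lambda>(i, j). tensor (g i) (h j)) ` (I \<times> J))"
      by (rule lc_in_span) (use assms in auto)
    finally show "x \<in> cv.span ((\<lambda>(i, j). tensor (g i) (h j)) ` (I \<times> J))" .
  qed
  show "cv.span ((\<lambda>(i, j). tensor (g i) (h j)) ` (I \<times> J)) \<subseteq> tens (cv.span (g ` I)) (cv.span (h ` J))"
    unfolding tens_def
  proof (rule cv.span_mono, rule subsetI)
    fix x assume "x \<in> (\<lambda>(i, j). tensor (g i) (h j)) ` (I \<times> J)"
    then obtain i j where "i \<in> I" "j \<in> J" "x = tensor (g i) (h j)" by auto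
    then show "x \<in> {\<lambda>(u, l). ga u * ha l |ga ha. ga \<in> cv.span (g ` I) \<and> ha \<in> cv.span (h ` J)}"
      unfolding tensor_def by (intro CollectI exI conjI) (auto intro: cv.span_base)
  qed
qed

lemma sum_prod_split: "(\<Sum>x\<in>A \<times> C. f x) = (\<Sum>u\<in>A. \<Sum>l\<in>C. f (u, l))"
  by (simp add: sum.cartesian_product)

lemma inner_tensor:
  assumes "finite A" "finite C"
  shows "inner_l2 (A \<times> C) (tensor g h) (tensor g' h') = inner_l2 A g g' * inner_l2 C h h'"
  unfolding inner_l2_def tensor_def
  by (simp add: sum_prod_split sum_product algebra_simps)

lemma orthon_tensor:
  assumes "finite A" "finite C" "orthon A g I" "orthon C h J"
  shows "orthon (A \<times> C) (\<lambda>(i, j). tensor (g i) (h j)) (I \<times> J)"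
  using assms unfolding orthon_def by (auto simp: inner_tensor)

lemma tensor_l2: "g \<in> l2 A \<Longrightarrow> h \<in> l2 C \<Longrightarrow> tensor g h \<in> l2 (A \<times> C)"
  by (auto simp: l2_def tensor_def)

lemma Lap_tensor:
  assumes "finite A" "finite C" and irr: "\<And>u. \<not> Ea u u" and g: "g \<in> l2 A" and h: "h \<in> l2 C"
  shows "Lap (A \<times> C) (prodE Ea Eb) (tensor g h) = tensor (Lap A Ea g) h + tensor g (Lap C Eb h)"
proof
  fix x :: "'a \<times> 'b"
  obtain u l where x: "x = (u, l)" by force
  show "Lap (A \<times> C) (prodE Ea Eb) (tensor g h) x = (tensor (Lap A Ea g) h + tensor g (Lap C Eb h)) x"
  proof (cases "u \<in> A \<and> l \<in> C")
    case False
    then show ?thesis using g h by (auto simp: x Lap_def tensor_def l2_def)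
  next
    case True
    have set: "{w \<in> A \<times> C. prodE Ea Eb (u, l) w} = (\<lambda>u'. (u', l)) ` {u' \<in> A. Ea u u'} \<union> (\<lambda>l'. (u, l')) ` {l' \<in> C. Eb l l'}"
      using True by (auto simp: prodE_def)
    have disj: "(\<lambda>u'. (u', l)) ` {u' \<in> A. Ea u u'} \<inter> (\<lambda>l'. (u, l')) ` {l' \<in> C. Eb l l'} = {}"
      using irr by auto
    have "Lap (A \<times> C) (prodE Ea Eb) (tensor g h) x
        = (\<Sum>w\<in>(\<lambda>u'. (u', l)) ` {u' \<in> A. Ea u u'}. tensor g h (u, l) - tensor g h w)
          + (\<Sum>w\<in>(\<lambda>l'. (u, l')) ` {l' \<in> C. Eb l l'}. tensor g h (u, l) - tensor g h w)"
      using True assms(1,2) disj by (simp add: x Lap_def set sum.union_disjoint)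
    also have "\<dots> = (\<Sum>u'\<in>{u' \<in> A. Ea u u'}. (g u - g u') * h l) + (\<Sum>l'\<in>{l' \<in> C. Eb l l'}. g u * (h l - h l'))"
      by (simp add: sum.reindex inj_on_def tensor_def algebra_simps)
    also have "\<dots> = (tensor (Lap A Ea g) h + tensor g (Lap C Eb h)) x"
      using True by (simp add: x tensor_def Lap_def sum_distrib_left sum_distrib_right)
    finally show ?thesis .
  qed
qed

lemma Lap_tensor_eig:
  assumes "finite A" "finite C" and irr: "\<And>u. \<not> Ea u u" and g: "g \<in> l2 A" and h: "h \<in> l2 C"
    and "Lap A Ea g = fscale (complex_of_real a) g" and "Lap C Eb h = fscale (complex_of_real b) h"
  shows "Lap (A \<times> C) (prodE Ea Eb) (tensor g h) = fscale (complex_of_real (a + b)) (tensor g h)"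
  using Lap_tensor[where Ea=Ea and Eb=Eb, OF assms(1-5)] assms(6,7)
  by (auto simp: fun_eq_iff tensor_def fscale_def algebra_simps)

definition ex :: "nat \<Rightarrow> int \<Rightarrow> int \<Rightarrow> complex" where
  "ex m k l = exp (2 * pi * \<i> * of_int k * of_int l / of_nat m)"

lemma ex_cis: "ex m k l = cis (2 * pi * of_int k * of_int l / of_nat m)"
  by (simp add: ex_def cis_conv_exp algebra_simps)

lemma cis_2pi_int: "cis (2 * pi * of_int n) = 1"
  by (simp add: complex_eq_iff cos_int_2pin)

lemma ex_add: "ex m k (a + b) = ex m k a * ex m k b"
  by (simp add: ex_cis cis_mult add_divide_distrib algebra_simps)

lemma ex_diff: "ex m k (a - b) = ex m k a * ex m k (- b)"
  by (metis diff_conv_add_uminus ex_add)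

lemma ex_add_k: "ex m (k + k') l = ex m k l * ex m k' l"
  by (simp add: ex_cis cis_mult add_divide_distrib algebra_simps)

lemma ex_period:
  assumes "m > 0" shows "ex m k (l + int m * q) = ex m k l"
proof -
  have e: "2 * pi * of_int k * of_int (int m * q) / of_nat m = 2 * pi * of_int (k * q)"
    using assms by (simp add: field_simps)
  have "ex m k (int m * q) = 1" unfolding ex_cis e by (rule cis_2pi_int)
  then show ?thesis by (simp add: ex_add)
qed

lemma ex_period_k:
  assumes "m > 0" shows "ex m (k + int m * q) l = ex m k l"
proof -
  have e: "2 * pi * of_int (int m * q) * of_int l / of_nat m = 2 * pi * of_int (q * l)"
    using assms by (simp add: field_simps)
  have "ex m (int m * q) l = 1" unfolding ex_cis e by (rule cis_2pi_int)
  then show ?thesis by (simp add: ex_add_k)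
qed

lemma ex_mod: "m > 0 \<Longrightarrow> ex m k (l mod int m) = ex m k l"
  using ex_period[of m k "l mod int m" "l div int m"] by (simp add: mult.commute)

lemma ex_mod_k: "m > 0 \<Longrightarrow> ex m (k mod int m) l = ex m k l"
  using ex_period_k[of m "k mod int m" "k div int m" l] by (simp add: mult.commute)

lemma ex_cnj: "cnj (ex m k l) = ex m (- k) l"
  by (simp add: ex_cis cis_cnj)

lemma ex_mult_cnj: "ex m k l * cnj (ex m k' l) = ex m (k - k') l"
  by (simp add: ex_cnj ex_add_k[symmetric])

lemma ex_zero [simp]: "ex m 0 l = 1" "ex m k 0 = 1"
  by (simp_all add: ex_def)

lemma ex_norm [simp]: "cmod (ex m k l) = 1"
  by (simp add: ex_cis)

lemma ex_pow: "ex m d (int n) = (ex m d 1) ^ n"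
  unfolding ex_cis by (subst Complex.DeMoivre) (rule arg_cong[where f=cis], simp add: field_simps)

lemma sum_int_range: "(\<Sum>l\<in>{0..<int m}. f l) = (\<Sum>n<m. f (int n))"
proof -
  have "{0..<int m} = int ` {0..<m}" by (simp add: image_int_atLeastLessThan)
  then show ?thesis by (simp add: sum.reindex lessThan_atLeast0)
qed

lemma ex_one_eq_1:
  assumes "m > 0" shows "ex m d 1 = 1 \<longleftrightarrow> int m dvd d"
proof
  assume "int m dvd d"
  then obtain q where "d = int m * q" by (auto simp: dvd_def)
  then show "ex m d 1 = 1" using ex_period_k[OF assms, of 0 q 1] by simp
next
  assume "ex m d 1 = 1"
  then have "cos (2 * pi * of_int d / of_nat m) = 1"
    by (simp add: ex_cis complex_eq_iff)
  then obtain n :: int where n: "2 * pi * of_int d / of_nat m = of_int n * 2 * pi"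
    by (auto simp: cos_one_2pi_int)
  then have "of_int d = of_int n * (of_nat m :: real)" using assms
    by (simp add: field_simps)
  then have "d = n * int m" by (metis of_int_eq_iff of_int_mult of_int_of_nat_eq)
  then show "int m dvd d" by simp
qed

lemma ex_geom:
  assumes "m > 0"
  shows "(\<Sum>l\<in>{0..<int m}. ex m d l) = (if int m dvd d then of_nat m else 0)"
proof (cases "int m dvd d")
  case True
  then obtain q where "d = int m * q" by (auto simp: dvd_def)
  then have "ex m d l = 1" for l using ex_period_k[OF assms, of 0 q l] by simp
  then show ?thesis using True by simp
next
  case False
  let ?z = "ex m d 1"
  have z1: "?z \<noteq> 1" using ex_one_eq_1[OF assms] False by simp
  have zm: "?z ^ m = 1" using ex_pow[of m d m] ex_period[OF assms, of d 0 1] by simp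
  have "(\<Sum>l\<in>{0..<int m}. ex m d l) = (\<Sum>n<m. ?z ^ n)"
    by (simp add: sum_int_range ex_pow)
  also have "\<dots> = 0" using geometric_sum[OF z1, of m] zm by simp
  finally show ?thesis using False by simp
qed

lemma cycV_fin [simp]: "finite (cycV m)" by (simp add: cycV_def)
lemma cycV_card [simp]: "card (cycV m) = m" by (simp add: cycV_def)

lemma cyc_sym: "cycE m a b = cycE m b a" by (auto simp: cycE_def)
lemma cyc_irr: "m \<ge> 2 \<Longrightarrow> \<not> cycE m a a" by (simp add: cycE_def)

lemma cyc_nb_gen:
  assumes "m \<ge> 3" "0 \<le> w" "w < int m"
  shows "(a - w) mod int m = 1 \<longleftrightarrow> w = (a - 1) mod int m"
proof -
  have one: "1 mod int m = 1" using assms by simp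
  have a: "(a - w) mod int m = 1 \<longleftrightarrow> int m dvd (a - w - 1)"
    using mod_eq_dvd_iff[of "a - w" "int m" 1] one by simp
  have wm: "w mod int m = w" using assms by simp
  have b: "w = (a - 1) mod int m \<longleftrightarrow> int m dvd (w - (a - 1))"
    using mod_eq_dvd_iff[of w "int m" "a - 1"] wm by simp
  have "int m dvd (a - w - 1) \<longleftrightarrow> int m dvd (w - (a - 1))"
    using dvd_minus_iff[of "int m" "w - (a - 1)"] by (simp add: algebra_simps)
  then show ?thesis using a b by simp
qed

lemma cyc_nb_aux:
  assumes "m \<ge> 3" "0 \<le> w" "w < int m"
  shows "(l - w) mod int m = 1 \<longleftrightarrow> w = (l - 1) mod int m"
  using cyc_nb_gen[OF assms] .

lemma cyc_nb_aux2:
  assumes "m \<ge> 3" "0 \<le> w" "w < int m"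
  shows "(w - l) mod int m = 1 \<longleftrightarrow> w = (l + 1) mod int m"
proof -
  have "(w - l) mod int m = 1 \<longleftrightarrow> int m dvd (w - l - 1)"
    using mod_eq_dvd_iff[of "w - l" "int m" 1] assms by simp
  moreover have "w = (l + 1) mod int m \<longleftrightarrow> int m dvd (w - (l + 1))"
    using mod_eq_dvd_iff[of w "int m" "l + 1"] assms by simp
  ultimately show ?thesis by (simp add: algebra_simps)
qed

lemma cyc_nbrs:
  assumes "m \<ge> 3"
  shows "{w \<in> cycV m. cycE m l w} = {(l + 1) mod int m, (l - 1) mod int m}"
    and "(l + 1) mod int m \<noteq> (l - 1) mod int m"
proof -
  show "{w \<in> cycV m. cycE m l w} = {(l + 1) mod int m, (l - 1) mod int m}"
    using cyc_nb_aux[OF assms] cyc_nb_aux2[OF assms] assms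
    by (auto simp: cycV_def cycE_def)
  show "(l + 1) mod int m \<noteq> (l - 1) mod int m"
  proof
    assume "(l + 1) mod int m = (l - 1) mod int m"
    then have "int m dvd ((l + 1) - (l - 1))" by (simp add: mod_eq_dvd_iff)
    then have "int m dvd 2" by simp
    then have "int m \<le> 2" by (rule zdvd_imp_le) simp
    then show False using assms by simp
  qed
qed

definition ecyc :: "nat \<Rightarrow> int \<Rightarrow> int \<Rightarrow> complex" where
  "ecyc m k = (\<lambda>l. if l \<in> cycV m then ex m k l / complex_of_real (sqrt (real m)) else 0)"

definition lamc :: "nat \<Rightarrow> int \<Rightarrow> real" where
  "lamc m k = 2 - 2 * cos (2 * pi * of_int k / of_nat m)"

lemma ecyc_l2: "ecyc m k \<in> l2 (cycV m)"
  by (simp add: ecyc_def l2_def)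

lemma ex_pm1: "ex m k 1 + ex m k (-1) = complex_of_real (2 * cos (2 * pi * of_int k / of_nat m))"
  by (simp add: ex_cis complex_eq_iff cis.sel)

lemma ecyc_eig:
  assumes "m \<ge> 3"
  shows "Lap (cycV m) (cycE m) (ecyc m k) = fscale (complex_of_real (lamc m k)) (ecyc m k)"
proof
  fix l
  show "Lap (cycV m) (cycE m) (ecyc m k) l = fscale (complex_of_real (lamc m k)) (ecyc m k) l"
  proof (cases "l \<in> cycV m")
    case False then show ?thesis by (simp add: Lap_def fscale_def ecyc_def)
  next
    case True
    have m0: "m > 0" using assms by simp
    have inC: "(l + 1) mod int m \<in> cycV m" "(l - 1) mod int m \<in> cycV m"
      using m0 by (auto simp: cycV_def)
    let ?s = "complex_of_real (sqrt (real m))"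
    have "Lap (cycV m) (cycE m) (ecyc m k) l
        = (ecyc m k l - ecyc m k ((l + 1) mod int m)) + (ecyc m k l - ecyc m k ((l - 1) mod int m))"
      using True cyc_nbrs[OF assms, of l] by (simp add: Lap_def)
    also have "\<dots> = (ex m k l / ?s) * (2 - (ex m k 1 + ex m k (-1)))"
      using True inC m0 by (simp add: ecyc_def ex_mod ex_add ex_diff field_simps)
    also have "\<dots> = fscale (complex_of_real (lamc m k)) (ecyc m k) l"
      using True by (simp add: ex_pm1 lamc_def fscale_def ecyc_def)
    finally show ?thesis .
  qed
qed

lemma sqrt_sq_c [simp]: "(complex_of_real (sqrt (real m)))^2 = of_nat m"
proof -
  have "(complex_of_real (sqrt (real m)))^2 = complex_of_real ((sqrt (real m))^2)" by (rule of_real_power[symmetric])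
  also have "\<dots> = of_nat m" by simp
  finally show ?thesis .
qed

lemma ecyc_inner:
  assumes "m > 0"
  shows "inner_l2 (cycV m) (ecyc m k) (ecyc m k') = (if int m dvd (k - k') then 1 else 0)"
proof -
  have "inner_l2 (cycV m) (ecyc m k) (ecyc m k') = (\<Sum>l\<in>{0..<int m}. ex m (k - k') l) / of_nat m"
    unfolding inner_l2_def ecyc_def cycV_def
    by (simp add: sum_divide_distrib ex_mult_cnj[symmetric] power2_eq_square[symmetric])
  also have "\<dots> = (if int m dvd (k - k') then 1 else 0)"
    using assms by (simp add: ex_geom)
  finally show ?thesis .
qed

lemma orthon_ecyc:
  assumes "m > 0" shows "orthon (cycV m) (ecyc m) {0..<int m}"
  unfolding orthon_def
proof (intro ballI)
  fix i j assume "i \<in> {0..<int m}" "j \<in> {0..<int m}"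
  then have "i mod int m = i" "j mod int m = j" by auto
  then have "int m dvd (i - j) \<longleftrightarrow> i = j"
    using mod_eq_dvd_iff[of i "int m" j] by simp
  then show "inner_l2 (cycV m) (ecyc m i) (ecyc m j) = (if i = j then 1 else 0)"
    using ecyc_inner[OF assms] by simp
qed

lemma cyc_span:
  assumes "m > 0" shows "cv.span (ecyc m ` {0..<int m}) = l2 (cycV m)"
  by (rule orthon_span_l2) (auto simp: orthon_ecyc assms ecyc_l2)

lemma lamc_bounds: "0 \<le> lamc m k" "lamc m k \<le> 4"
proof -
  have "-1 \<le> cos (2 * pi * of_int k / of_nat m)" "cos (2 * pi * of_int k / of_nat m) \<le> 1"
    by (rule cos_ge_minus_one, rule cos_le_one)
  then show "0 \<le> lamc m k" "lamc m k \<le> 4" unfolding lamc_def by linarith+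
qed

lemma lamc_zero:
  assumes "m > 0" "0 \<le> k" "k < int m" "lamc m k = 0" shows "k = 0"
proof -
  have "cos (2 * pi * of_int k / of_nat m) = 1" using assms(4) by (simp add: lamc_def)
  then obtain n :: int where n: "2 * pi * of_int k / of_nat m = of_int n * 2 * pi"
    by (auto simp: cos_one_2pi_int)
  then have e: "of_int k = of_int n * (of_nat m :: real)" using assms by (simp add: field_simps)
  then have kn: "k = n * int m" by (metis of_int_eq_iff of_int_mult of_int_of_nat_eq)
  have "0 \<le> n" using assms kn by (auto simp add: zero_le_mult_iff)
  moreover have "n < 1" using assms kn mult_less_cancel_right[of n "int m" 1] by simp
  ultimately show ?thesis using kn by simp
qed

lemma lamc_0 [simp]: "lamc m 0 = 0" by (simp add: lamc_def)

lemma cube_sym: "cubeE N v w = cubeE N w v" unfolding cubeE_def by metis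
lemma cube_irr: "\<not> cubeE N v v" by (simp add: cubeE_def)

lemma cubeV_img: "cubeV N = (\<lambda>S i. i \<in> S) ` Pow {..<N}"
proof
  show "cubeV N \<subseteq> (\<lambda>S i. i \<in> S) ` Pow {..<N}"
  proof
    fix v assume "v \<in> cubeV N"
    then have "v = (\<lambda>i. i \<in> {i. v i})" "{i. v i} \<in> Pow {..<N}"
      by (auto simp: cubeV_def not_le[symmetric])
    then show "v \<in> (\<lambda>S i. i \<in> S) ` Pow {..<N}" by blast
  qed
qed (auto simp: cubeV_def)

lemma cubeV_fin [simp]: "finite (cubeV N)" by (simp add: cubeV_img)

lemma cubeV_card: "card (cubeV N) = 2 ^ N"
proof -
  have "inj_on (\<lambda>S i. i \<in> S) (Pow {..<N})" by (auto simp: inj_on_def fun_eq_iff)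
  then show ?thesis by (simp add: cubeV_img card_image card_Pow)
qed

lemma orthon_subset: "orthon V b I \<Longrightarrow> J \<subseteq> I \<Longrightarrow> orthon V b J"
  unfolding orthon_def by blast

lemma dim_orthon:
  assumes "finite J" "orthon V b J"
  shows "cdim (cv.span (b ` J)) = card J"
proof -
  have "cdim (cv.span (b ` J)) = card (b ` J)"
    by (rule cv.dim_span_eq_card_independent[OF orthon_indep[OF assms]])
  also have "\<dots> = card J" using orthon_inj[OF assms(2)] by (simp add: card_image)
  finally show ?thesis .
qed

lemma span_Un3:
  "cv.span (X \<union> Y \<union> Z) = {a + b + c | a b c. a \<in> cv.span X \<and> b \<in> cv.span Y \<and> c \<in> cv.span Z}"
  by (auto simp: cv.span_Un)

lemma slice_tens:
  assumes X: "cv.subspace X" and f: "f \<in> tens X Y"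
  shows "(\<lambda>u. f (u, l0)) \<in> X"
proof -
  have "f \<in> cv.span {(\<lambda>(u, l). g u * h l) | g h. g \<in> X \<and> h \<in> Y}" using f by (simp add: tens_def)
  then show ?thesis
  proof (rule cv.span_induct)
    show "cv.subspace {f. (\<lambda>u. f (u, l0)) \<in> X}"
      unfolding cv.subspace_def
    proof (intro conjI allI ballI impI)
      show "0 \<in> {f. (\<lambda>u. f (u, l0)) \<in> X}" using cv.subspace_0[OF X] by (simp add: zero_fun_def)
      fix x y assume "x \<in> {f. (\<lambda>u. f (u, l0)) \<in> X}" "y \<in> {f. (\<lambda>u. f (u, l0)) \<in> X}"
      then have "(\<lambda>u. x (u, l0)) + (\<lambda>u. y (u, l0)) \<in> X" using cv.subspace_add[OF X] by simp
      then show "x + y \<in> {f. (\<lambda>u. f (u, l0)) \<in> X}" by (simp add: plus_fun_def)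
    next
      fix c x assume "x \<in> {f. (\<lambda>u. f (u, l0)) \<in> X}"
      then have "fscale c (\<lambda>u. x (u, l0)) \<in> X" using cv.subspace_scale[OF X] by simp
      then show "fscale c x \<in> {f. (\<lambda>u. f (u, l0)) \<in> X}" by (simp add: fscale_def)
    qed
    fix x assume "x \<in> {(\<lambda>(u, l). g u * h l) | g h. g \<in> X \<and> h \<in> Y}"
    then obtain g h where x: "x = (\<lambda>(u, l). g u * h l)" and g: "g \<in> X" by auto
    have "fscale (h l0) g \<in> X" using cv.subspace_scale[OF X g] .
    then show "(\<lambda>u. x (u, l0)) \<in> X" by (simp add: x fscale_def mult.commute)
  qed
qed

lemma normQ:
  assumes finA: "finite A" and finC: "finite C" and C0: "(0::int) \<in> C" and finI: "finite I"
    and on: "orthon A g I" and fs: "(\<lambda>u. f (u, 0)) \<in> cv.span (g ` I)"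
  shows "(\<Sum>i\<in>I. (cmod (inner_l2 (A \<times> C) (Qop f) (\<lambda>(u, l). if (u, l) \<in> A \<times> C then \<phi> l * g i u else 0)))^2)
         = (cmod (\<phi> 0))^2 * norm2_l2 (A \<times> C) (Qop f)"
proof -
  obtain c where c: "(\<lambda>u. f (u, 0)) = lc c g I" using span_lc_obtain[OF finI fs] by blast
  have fu: "f (u, 0) = lc c g I u" for u using c by (metis (no_types))
  have n: "norm2_l2 (A \<times> C) (Qop f) = (\<Sum>i\<in>I. (cmod (c i))^2)"
  proof -
    have "norm2_l2 (A \<times> C) (Qop f) = (\<Sum>u\<in>A. \<Sum>l\<in>C. (cmod (if l = 0 then f (u, l) else 0))^2)"
      by (simp add: norm2_l2_def sum_prod_split Qop_def)
    also have "\<dots> = (\<Sum>u\<in>A. (cmod (f (u, 0)))^2)"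
      using finC C0 by (simp add: if_distrib[of "\<lambda>x. (cmod x)^2"] sum.delta cong: if_cong)
    also have "\<dots> = norm2_l2 A (lc c g I)" by (simp add: norm2_l2_def fu)
    also have "\<dots> = (\<Sum>i\<in>I. (cmod (c i))^2)" by (rule orthon_norm2[OF finI on])
    finally show ?thesis .
  qed
  have ip: "inner_l2 (A \<times> C) (Qop f) (\<lambda>(u, l). if (u, l) \<in> A \<times> C then \<phi> l * g i u else 0) = cnj (\<phi> 0) * c i"
    if i: "i \<in> I" for i
  proof -
    have "inner_l2 (A \<times> C) (Qop f) (\<lambda>(u, l). if (u, l) \<in> A \<times> C then \<phi> l * g i u else 0)
        = (\<Sum>u\<in>A. \<Sum>l\<in>C. (if l = 0 then f (u, 0) * cnj (\<phi> 0 * g i u) else 0))"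
      unfolding inner_l2_def sum_prod_split by (intro sum.cong refl) (auto simp: Qop_def)
    also have "\<dots> = (\<Sum>u\<in>A. f (u, 0) * cnj (\<phi> 0 * g i u))"
      using finC C0 by simp
    also have "\<dots> = cnj (\<phi> 0) * inner_l2 A (lc c g I) (g i)"
      by (simp add: inner_l2_def fu sum_distrib_left algebra_simps)
    also have "\<dots> = cnj (\<phi> 0) * c i" using orthon_coeff[OF finI on i] by simp
    finally show ?thesis .
  qed
  have "(\<Sum>i\<in>I. (cmod (inner_l2 (A \<times> C) (Qop f) (\<lambda>(u, l). if (u, l) \<in> A \<times> C then \<phi> l * g i u else 0)))^2)
      = (\<Sum>i\<in>I. (cmod (\<phi> 0))^2 * (cmod (c i))^2)"
    by (intro sum.cong refl) (simp only: ip, simp add: norm_mult power_mult_distrib)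
  also have "\<dots> = (cmod (\<phi> 0))^2 * norm2_l2 (A \<times> C) (Qop f)"
    by (simp add: n sum_distrib_left)
  finally show ?thesis .
qed

locale setup4 =
  fixes N m K :: nat and \<psi> :: "nat \<Rightarrow> nat \<Rightarrow> (nat \<Rightarrow> bool) \<Rightarrow> complex"
  assumes N2: "N \<ge> 2" and m3: "m \<ge> 3" and K0: "0 < K" and KN: "K < N"
    and \<psi>_onb: "\<And>\<kappa>. \<kappa> \<le> N \<Longrightarrow>
       is_onb (cubeV N) (eigsp (cubeV N) (cubeE N) (2 * real \<kappa>)) (\<psi> \<kappa>) {1..N choose \<kappa>}"
begin

lemma m0: "m > 0" using m3 by simp

lemma \<psi>_span: "\<kappa> \<le> N \<Longrightarrow> cv.span (\<psi> \<kappa> ` {1..N choose \<kappa>}) = eigsp (cubeV N) (cubeE N) (2 * real \<kappa>)"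
  using \<psi>_onb by (simp add: is_onb_def)

lemma \<psi>_orth: "\<kappa> \<le> N \<Longrightarrow> orthon (cubeV N) (\<psi> \<kappa>) {1..N choose \<kappa>}"
  using \<psi>_onb by (simp add: is_onb_def orthon_def)

lemma \<psi>_eig:
  assumes "\<kappa> \<le> N" "\<nu> \<in> {1..N choose \<kappa>}"
  shows "\<psi> \<kappa> \<nu> \<in> l2 (cubeV N)"
    and "Lap (cubeV N) (cubeE N) (\<psi> \<kappa> \<nu>) = fscale (complex_of_real (2 * real \<kappa>)) (\<psi> \<kappa> \<nu>)"
proof -
  have "\<psi> \<kappa> \<nu> \<in> eigsp (cubeV N) (cubeE N) (2 * real \<kappa>)"
    using \<psi>_span[OF assms(1)] cv.span_base[of "\<psi> \<kappa> \<nu>" "\<psi> \<kappa> ` {1..N choose \<kappa>}"] assms(2) by auto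
  then show "\<psi> \<kappa> \<nu> \<in> l2 (cubeV N)"
    "Lap (cubeV N) (cubeE N) (\<psi> \<kappa> \<nu>) = fscale (complex_of_real (2 * real \<kappa>)) (\<psi> \<kappa> \<nu>)"
    by (auto simp: eigsp_def)
qed

definition Ic :: "(nat \<times> nat) set" where "Ic = Sigma {..N} (\<lambda>\<kappa>. {1..N choose \<kappa>})"
definition gc :: "nat \<times> nat \<Rightarrow> (nat \<Rightarrow> bool) \<Rightarrow> complex" where "gc = (\<lambda>(\<kappa>, \<nu>). \<psi> \<kappa> \<nu>)"

lemma Ic_fin [simp]: "finite Ic" by (simp add: Ic_def)

lemma card_Ic: "card Ic = 2 ^ N"
  by (simp add: Ic_def card_SigmaI choose_row_sum)

lemma gc_l2: "i \<in> Ic \<Longrightarrow> gc i \<in> l2 (cubeV N)"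
  by (auto simp: Ic_def gc_def intro: \<psi>_eig)

lemma gc_eig:
  assumes "i \<in> Ic" shows "Lap (cubeV N) (cubeE N) (gc i) = fscale (complex_of_real (2 * real (fst i))) (gc i)"
proof -
  obtain \<kappa> \<nu> where i: "i = (\<kappa>, \<nu>)" by force
  then have "\<kappa> \<le> N" "\<nu> \<in> {1..N choose \<kappa>}" using assms by (auto simp: Ic_def)
  then show ?thesis using \<psi>_eig(2) by (simp add: i gc_def)
qed

lemma orthon_gc: "orthon (cubeV N) gc Ic"
  unfolding orthon_def
proof (intro ballI)
  fix i j assume i: "i \<in> Ic" and j: "j \<in> Ic"
  obtain \<kappa> \<nu> \<kappa>' \<nu>' where ij: "i = (\<kappa>, \<nu>)" "j = (\<kappa>', \<nu>')" by force
  show "inner_l2 (cubeV N) (gc i) (gc j) = (if i = j then 1 else 0)"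
  proof (cases "\<kappa> = \<kappa>'")
    case True
    then show ?thesis using i j \<psi>_orth[of \<kappa>] unfolding orthon_def by (auto simp: ij gc_def Ic_def)
  next
    case False
    have "inner_l2 (cubeV N) (gc i) (gc j) = 0"
      by (rule eig_orth[OF cubeV_fin cube_sym gc_eig[OF i] gc_eig[OF j]]) (use False in \<open>simp add: ij\<close>)
    then show ?thesis using False by (simp add: ij)
  qed
qed

lemma cube_span: "cv.span (gc ` Ic) = l2 (cubeV N)"
  by (rule orthon_span_l2[OF cubeV_fin Ic_fin orthon_gc gc_l2]) (simp_all add: card_Ic cubeV_card)

lemma PW_cube: "PW (cubeV N) (cubeE N) la = cv.span (gc ` {i\<in>Ic. 2 * real (fst i) \<le> la})"
  by (rule spectral(1)[OF cubeV_fin cube_sym Ic_fin orthon_gc cube_span gc_eig])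

definition I1 :: "(nat \<times> nat) set" where "I1 = Sigma {..<K-1} (\<lambda>\<kappa>. {1..N choose \<kappa>})"

lemma I1_sub: "I1 \<subseteq> Ic" using KN by (auto simp: I1_def Ic_def)
lemma I1_fin [simp]: "finite I1" by (simp add: I1_def)

lemma I1_eq: "{i\<in>Ic. 2 * real (fst i) \<le> 2 * real K - 4} = I1"
proof -
  have e: "2 * real k \<le> 2 * real K - 4 \<longleftrightarrow> k < K - 1" for k
  proof -
    have "2 * real k \<le> 2 * real K - 4 \<longleftrightarrow> real (k + 2) \<le> real K" by (simp only: of_nat_add) linarith
    also have "\<dots> \<longleftrightarrow> k + 2 \<le> K" by (rule of_nat_le_iff)
    also have "\<dots> \<longleftrightarrow> k < K - 1" using K0 by arith
    finally show ?thesis .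
  qed
  show ?thesis
  proof (intro set_eqI)
    fix i :: "nat \<times> nat"
    obtain \<kappa> \<nu> where i: "i = (\<kappa>, \<nu>)" by force
    have "\<kappa> < K - 1 \<Longrightarrow> \<kappa> \<le> N" using KN by linarith
    then show "i \<in> {i\<in>Ic. 2 * real (fst i) \<le> 2 * real K - 4} \<longleftrightarrow> i \<in> I1"
      unfolding i Ic_def I1_def mem_Collect_eq mem_Sigma_iff fst_conv e by auto
  qed
qed

lemma PW_cube_K: "PW (cubeV N) (cubeE N) (2 * real K - 4) = cv.span (gc ` I1)"
  by (simp only: PW_cube I1_eq)

lemma cyc_PW: "PW (cycV m) (cycE m) la = cv.span (ecyc m ` {k\<in>{0..<int m}. lamc m k \<le> la})"
  by (rule spectral(1)[OF cycV_fin cyc_sym _ orthon_ecyc[OF m0] cyc_span[OF m0] ecyc_eig[OF m3]]) simp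

lemma cyc_eig0: "eigsp (cycV m) (cycE m) 0 = cv.span (ecyc m ` {0})"
proof -
  have "eigsp (cycV m) (cycE m) 0 = cv.span (ecyc m ` {k\<in>{0..<int m}. lamc m k = 0})"
    by (rule spectral(2)[OF cycV_fin cyc_sym _ orthon_ecyc[OF m0] cyc_span[OF m0] ecyc_eig[OF m3]]) simp
  also have "{k\<in>{0..<int m}. lamc m k = 0} = {0}" using lamc_zero[OF m0] m0 by auto
  finally show ?thesis .
qed

definition Ip where "Ip = Ic \<times> {0..<int m}"
definition bp where "bp = (\<lambda>(i, k). tensor (gc i) (ecyc m k))"
definition lamp where "lamp = (\<lambda>(i, k). 2 * real (fst i) + lamc m k)"

lemma Ip_fin [simp]: "finite Ip" by (simp add: Ip_def)

lemma orthon_bp: "orthon (cubeV N \<times> cycV m) bp Ip"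
  unfolding bp_def Ip_def by (rule orthon_tensor[OF cubeV_fin cycV_fin orthon_gc orthon_ecyc[OF m0]])

lemma bp_l2: "p \<in> Ip \<Longrightarrow> bp p \<in> l2 (cubeV N \<times> cycV m)"
  by (auto simp: bp_def Ip_def intro!: tensor_l2 gc_l2 ecyc_l2)

lemma bp_eig: "p \<in> Ip \<Longrightarrow> Lap (cubeV N \<times> cycV m) (prodE (cubeE N) (cycE m)) (bp p)
    = fscale (complex_of_real (lamp p)) (bp p)"
  by (auto simp: bp_def Ip_def lamp_def intro!: Lap_tensor_eig cube_irr gc_l2 ecyc_l2 gc_eig ecyc_eig m3)

lemma prod_span: "cv.span (bp ` Ip) = l2 (cubeV N \<times> cycV m)"
  by (rule orthon_span_l2[OF _ Ip_fin orthon_bp bp_l2]) (simp_all add: Ip_def card_cartesian_product card_Ic cubeV_card)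

lemma prod_sym: "prodE (cubeE N) (cycE m) x y = prodE (cubeE N) (cycE m) y x"
  unfolding prodE_def using cube_sym cyc_sym by metis

lemma PW_prod: "PW (cubeV N \<times> cycV m) (prodE (cubeE N) (cycE m)) la = cv.span (bp ` {p\<in>Ip. lamp p \<le> la})"
  by (rule spectral(1)[OF _ prod_sym Ip_fin orthon_bp prod_span bp_eig]) simp

definition Kc2 where "Kc2 = {k\<in>{0..<int m}. lamc m k \<le> 2}"
definition J1 where "J1 = I1 \<times> {0..<int m}"
definition J2 where "J2 = ({K-1} \<times> {1..N choose (K-1)}) \<times> Kc2"
definition J3 where "J3 = ({K} \<times> {1..N choose K}) \<times> {0::int}"

lemma Kc2_sub: "Kc2 \<subseteq> {0..<int m}" by (auto simp: Kc2_def)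
lemma Kc2_fin [simp]: "finite Kc2" using Kc2_sub finite_subset by blast

lemma J_fin [simp]: "finite J1" "finite J2" "finite J3"
  by (simp_all add: J1_def J2_def J3_def)

lemma J_sub: "J1 \<subseteq> Ip" "J2 \<subseteq> Ip" "J3 \<subseteq> Ip"
  using I1_sub KN m0 by (auto simp: J1_def J2_def J3_def Ip_def Ic_def Kc2_def)

lemma J_disj: "J1 \<inter> J2 = {}" "J1 \<inter> J3 = {}" "J2 \<inter> J3 = {}"
  using K0 by (auto simp: J1_def J2_def J3_def I1_def)

lemma J_split: "{p\<in>Ip. lamp p \<le> 2 * real K} = J1 \<union> J2 \<union> J3"
proof (intro set_eqI iffI)
  fix p assume "p \<in> {p\<in>Ip. lamp p \<le> 2 * real K}"
  then obtain \<kappa> \<nu> k where p: "p = ((\<kappa>, \<nu>), k)" and \<kappa>: "\<kappa> \<le> N" and \<nu>: "\<nu> \<in> {1..N choose \<kappa>}"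
    and k: "k \<in> {0..<int m}" and le: "2 * real \<kappa> + lamc m k \<le> 2 * real K"
    by (auto simp: Ip_def Ic_def lamp_def)
  have lb: "0 \<le> lamc m k" "lamc m k \<le> 4" by (rule lamc_bounds)+
  consider "\<kappa> + 2 \<le> K" | "\<kappa> + 1 = K" | "\<kappa> = K" using le lb by linarith
  then show "p \<in> J1 \<union> J2 \<union> J3"
  proof cases
    case 1 then show ?thesis using p \<nu> k by (auto simp: J1_def I1_def)
  next
    case 2
    then have "lamc m k \<le> 2" using le by linarith
    then show ?thesis using p \<nu> k 2 by (auto simp: J2_def Kc2_def)
  next
    case 3
    then have "lamc m k = 0" using le lb by linarith
    then have "k = 0" using lamc_zero[OF m0] k by auto
    then show ?thesis using p \<nu> 3 by (auto simp: J3_def)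
  qed
next
  fix p assume p: "p \<in> J1 \<union> J2 \<union> J3"
  then have "p \<in> Ip" using J_sub by blast
  moreover have "lamp p \<le> 2 * real K"
  proof -
    obtain \<kappa> \<nu> k where pe: "p = ((\<kappa>, \<nu>), k)" by (metis prod.collapse)
    have lb: "0 \<le> lamc m k" "lamc m k \<le> 4" by (rule lamc_bounds)+
    have "(\<kappa> < K - 1) \<or> (\<kappa> = K - 1 \<and> lamc m k \<le> 2) \<or> (\<kappa> = K \<and> k = 0)"
      using p by (auto simp: pe J1_def J2_def J3_def I1_def Kc2_def)
    then show ?thesis using lb K0 by (auto simp: pe lamp_def of_nat_diff)
  qed
  ultimately show "p \<in> {p\<in>Ip. lamp p \<le> 2 * real K}" by simp
qed

lemma S1_eq: "tens (PW (cubeV N) (cubeE N) (2 * real K - 4)) (l2 (cycV m)) = cv.span (bp ` J1)"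
  unfolding PW_cube_K cyc_span[OF m0, symmetric] J1_def bp_def
  by (rule tens_span) simp_all

lemma gc_img: "gc ` ({\<kappa>} \<times> B) = \<psi> \<kappa> ` B"
  by (auto simp: gc_def image_iff)

lemma S2_eq: "tens (eigsp (cubeV N) (cubeE N) (2 * real K - 2)) (PW (cycV m) (cycE m) 2) = cv.span (bp ` J2)"
proof -
  have k: "2 * real K - 2 = 2 * real (K - 1)" using K0 by (simp add: of_nat_diff)
  have e: "eigsp (cubeV N) (cubeE N) (2 * real K - 2) = cv.span (gc ` ({K-1} \<times> {1..N choose (K-1)}))"
    unfolding k gc_img using \<psi>_span[of "K-1"] KN by simp
  show ?thesis unfolding e cyc_PW J2_def bp_def Kc2_def[symmetric]
    by (rule tens_span) simp_all
qed

lemma S3_eq: "tens (eigsp (cubeV N) (cubeE N) (2 * real K)) (eigsp (cycV m) (cycE m) 0) = cv.span (bp ` J3)"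
proof -
  have e: "eigsp (cubeV N) (cubeE N) (2 * real K) = cv.span (gc ` ({K} \<times> {1..N choose K}))"
    unfolding gc_img using \<psi>_span[of "K"] KN by simp
  show ?thesis unfolding e cyc_eig0 J3_def bp_def
    by (rule tens_span) simp_all
qed

lemma orth_J:
  assumes "J \<subseteq> Ip" "J' \<subseteq> Ip" "J \<inter> J' = {}" "a \<in> cv.span (bp ` J)" "b \<in> cv.span (bp ` J')"
  shows "inner_l2 (cubeV N \<times> cycV m) a b = 0"
proof -
  have fin: "finite J" "finite J'" using assms(1,2) Ip_fin finite_subset by blast+
  obtain c where c: "a = lc c bp J" using span_lc_obtain[OF fin(1) assms(4)] by blast
  obtain d where d: "b = lc d bp J'" using span_lc_obtain[OF fin(2) assms(5)] by blast
  show ?thesis unfolding c d by (rule orthon_disjoint[OF fin orthon_bp assms(1-3)])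
qed

lemma dim_J: "J \<subseteq> Ip \<Longrightarrow> cdim (cv.span (bp ` J)) = card J"
  using dim_orthon[of J "cubeV N \<times> cycV m" bp] orthon_subset[OF orthon_bp] Ip_fin finite_subset by blast

end

lemma is_onb_iff: "is_onb V S b I \<longleftrightarrow> orthon V b I \<and> cv.span (b ` I) = S"
  by (simp add: is_onb_def orthon_def)

definition dc :: "int \<Rightarrow> int \<Rightarrow> complex" where "dc j = (\<lambda>l. if l = j then 1 else 0)"

lemma orthon_dc: "finite C \<Longrightarrow> orthon C dc C"
  unfolding orthon_def
proof (intro ballI)
  fix i j assume fin: "finite C" and ij: "i \<in> C" "j \<in> C"
  have "inner_l2 C (dc i) (dc j) = (\<Sum>x\<in>C. if x = i then (if i = j then 1 else 0) else 0)"
    unfolding inner_l2_def by (intro sum.cong) (auto simp: dc_def)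
  also have "\<dots> = (if i = j then 1 else 0)" using fin ij by simp
  finally show "inner_l2 C (dc i) (dc j) = (if i = j then 1 else 0)" .
qed

lemma dc_l2: "j \<in> C \<Longrightarrow> dc j \<in> l2 C" by (auto simp: dc_def l2_def)

lemma dc_span: "finite C \<Longrightarrow> cv.span (dc ` C) = l2 C"
  by (rule orthon_span_l2) (auto simp: orthon_dc dc_l2)

context setup4
begin

lemma delta0_mod:
  assumes "l \<in> cycV m" "j \<in> cycV m"
  shows "delta0 ((l - j) mod int m) = dc j l"
proof -
  have "l mod int m = l" "j mod int m = j" using assms by (auto simp: cycV_def)
  then have "(l - j) mod int m = 0 \<longleftrightarrow> l = j"
    using mod_eq_dvd_iff[of l "int m" j] by (simp add: dvd_eq_mod_eq_0)
  then show ?thesis by (simp add: delta0_def dc_def)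
qed

lemma \<psi>_zero: "\<kappa> \<le> N \<Longrightarrow> \<nu> \<in> {1..N choose \<kappa>} \<Longrightarrow> u \<notin> cubeV N \<Longrightarrow> \<psi> \<kappa> \<nu> u = 0"
  using \<psi>_eig(1) by (auto simp: l2_def)

definition F1 where "F1 = (\<lambda>(j, \<kappa>, \<nu>). \<lambda>(u, l). if (u, l) \<in> cubeV N \<times> cycV m then delta0 ((l - j) mod int m) * \<psi> \<kappa> \<nu> u else 0)"
definition T1 where "T1 = (\<lambda>(i, j). tensor (gc i) (dc j))"

lemma F1_T1: "j \<in> cycV m \<Longrightarrow> i \<in> I1 \<Longrightarrow> F1 (j, i) = T1 (i, j)"
proof -
  assume j: "j \<in> cycV m" and i: "i \<in> I1"
  obtain \<kappa> \<nu> where i': "i = (\<kappa>, \<nu>)" by force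
  have \<kappa>: "\<kappa> \<le> N" "\<nu> \<in> {1..N choose \<kappa>}" using i I1_sub by (auto simp: i' Ic_def)
  show ?thesis
  proof (rule ext, clarify)
    fix u l
    show "F1 (j, i) (u, l) = T1 (i, j) (u, l)"
      using delta0_mod[of l j] j \<psi>_zero[OF \<kappa>, of u]
      by (auto simp: F1_def T1_def i' tensor_def gc_def dc_def)
  qed
qed

lemma S1_onb:
  "is_onb (cubeV N \<times> cycV m) (tens (PW (cubeV N) (cubeE N) (2 * real K - 4)) (l2 (cycV m))) F1 (cycV m \<times> I1)"
proof -
  have sp: "tens (PW (cubeV N) (cubeE N) (2 * real K - 4)) (l2 (cycV m)) = cv.span (T1 ` (I1 \<times> cycV m))"
    unfolding PW_cube_K dc_span[OF cycV_fin, symmetric] T1_def by (rule tens_span) simp_all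
  have oT: "orthon (cubeV N \<times> cycV m) T1 (I1 \<times> cycV m)"
    unfolding T1_def by (rule orthon_tensor[OF cubeV_fin cycV_fin orthon_subset[OF orthon_gc I1_sub] orthon_dc[OF cycV_fin]])
  have img: "F1 ` (cycV m \<times> I1) = T1 ` (I1 \<times> cycV m)"
  proof
    show "F1 ` (cycV m \<times> I1) \<subseteq> T1 ` (I1 \<times> cycV m)" using F1_T1 by force
    show "T1 ` (I1 \<times> cycV m) \<subseteq> F1 ` (cycV m \<times> I1)"
    proof
      fix x assume "x \<in> T1 ` (I1 \<times> cycV m)"
      then obtain i j where "i \<in> I1" "j \<in> cycV m" "x = T1 (i, j)" by auto
      then show "x \<in> F1 ` (cycV m \<times> I1)" using F1_T1 by (metis SigmaI image_eqI)
    qed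
  qed
  have oF: "orthon (cubeV N \<times> cycV m) F1 (cycV m \<times> I1)"
    unfolding orthon_def
  proof (intro ballI)
    fix p q assume p: "p \<in> cycV m \<times> I1" and q: "q \<in> cycV m \<times> I1"
    obtain j i where pq1: "p = (j, i)" by (cases p) blast
    obtain j' i' where pq2: "q = (j', i')" by (cases q) blast
    note pq = pq1 pq2
    have "inner_l2 (cubeV N \<times> cycV m) (F1 p) (F1 q) = inner_l2 (cubeV N \<times> cycV m) (T1 (i, j)) (T1 (i', j'))"
      using p q by (simp add: pq F1_T1)
    also have "\<dots> = (if (i, j) = (i', j') then 1 else 0)"
      using oT p q unfolding orthon_def by (auto simp: pq)
    finally show "inner_l2 (cubeV N \<times> cycV m) (F1 p) (F1 q) = (if p = q then 1 else 0)"
      by (auto simp: pq)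
  qed
  show ?thesis unfolding is_onb_iff using oF sp img by simp
qed

definition F3 where "F3 = (\<lambda>\<nu>. \<lambda>(u, l). if (u, l) \<in> cubeV N \<times> cycV m then \<psi> K \<nu> u / complex_of_real (sqrt (real m)) else 0)"

lemma F3_bp: "\<nu> \<in> {1..N choose K} \<Longrightarrow> F3 \<nu> = bp ((K, \<nu>), 0)"
proof (rule ext, clarify)
  fix u l assume \<nu>: "\<nu> \<in> {1..N choose K}"
  show "F3 \<nu> (u, l) = bp ((K, \<nu>), 0) (u, l)"
    using \<psi>_zero[of K \<nu> u] \<nu> KN
    by (auto simp: F3_def bp_def tensor_def gc_def ecyc_def)
qed

lemma S3_onb:
  "is_onb (cubeV N \<times> cycV m) (tens (eigsp (cubeV N) (cubeE N) (2 * real K)) (eigsp (cycV m) (cycE m) 0)) F3 {1..N choose K}"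
proof -
  have img: "F3 ` {1..N choose K} = bp ` J3"
  proof
    show "F3 ` {1..N choose K} \<subseteq> bp ` J3" using F3_bp by (force simp: J3_def)
    show "bp ` J3 \<subseteq> F3 ` {1..N choose K}" using F3_bp by (force simp: J3_def)
  qed
  have oF: "orthon (cubeV N \<times> cycV m) F3 {1..N choose K}"
    unfolding orthon_def
  proof (intro ballI)
    fix \<nu> \<nu>' assume a: "\<nu> \<in> {1..N choose K}" "\<nu>' \<in> {1..N choose K}"
    have "((K, \<nu>), 0::int) \<in> Ip" "((K, \<nu>'), 0::int) \<in> Ip" using J_sub(3) a by (auto simp: J3_def)
    then show "inner_l2 (cubeV N \<times> cycV m) (F3 \<nu>) (F3 \<nu>') = (if \<nu> = \<nu>' then 1 else 0)"
      using orthon_bp a unfolding orthon_def by (simp add: F3_bp)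
  qed
  show ?thesis unfolding is_onb_iff S3_eq using oF img by simp
qed

lemma S1_norm:
  assumes "f \<in> tens (PW (cubeV N) (cubeE N) (2 * real K - 4)) (l2 (cycV m))"
  shows "norm2_l2 (cubeV N \<times> cycV m) (Qop f) =
          (\<Sum>\<kappa><K - 1. \<Sum>\<nu>\<in>{1..N choose \<kappa>}.
             (cmod (inner_l2 (cubeV N \<times> cycV m) (Qop f)
                (\<lambda>(u, l). if (u, l) \<in> cubeV N \<times> cycV m then delta0 l * \<psi> \<kappa> \<nu> u else 0)))^2)"
proof -
  have sl: "(\<lambda>u. f (u, 0)) \<in> cv.span (gc ` I1)"
    using slice_tens[OF _ assms] PW_cube_K cv.subspace_span by metis
  have h1: "(\<Sum>i\<in>I1. (cmod (inner_l2 (cubeV N \<times> cycV m) (Qop f) (\<lambda>(u, l). if (u, l) \<in> cubeV N \<times> cycV m then delta0 l * gc i u else 0)))^2)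
      = (cmod (delta0 0))^2 * norm2_l2 (cubeV N \<times> cycV m) (Qop f)"
    by (rule normQ[OF cubeV_fin cycV_fin _ I1_fin orthon_subset[OF orthon_gc I1_sub] sl]) (use m0 in \<open>simp add: cycV_def\<close>)
  have h2: "(cmod (delta0 0))^2 = 1" by (simp add: delta0_def)
  have h3: "(\<Sum>i\<in>I1. G (gc i)) = (\<Sum>\<kappa><K - 1. \<Sum>\<nu>\<in>{1..N choose \<kappa>}. G (\<psi> \<kappa> \<nu>))"
    for G :: "((nat \<Rightarrow> bool) \<Rightarrow> complex) \<Rightarrow> real"
  proof -
    have "(\<Sum>i\<in>I1. G (gc i)) = (\<Sum>(\<kappa>, \<nu>)\<in>I1. G (\<psi> \<kappa> \<nu>))" by (rule sum.cong) (auto simp: gc_def)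
    also have "\<dots> = (\<Sum>\<kappa><K - 1. \<Sum>\<nu>\<in>{1..N choose \<kappa>}. G (\<psi> \<kappa> \<nu>))" unfolding I1_def by (rule sum.Sigma[symmetric]) auto
    finally show ?thesis .
  qed
  show ?thesis using h1 h2 h3[of "\<lambda>x. (cmod (inner_l2 (cubeV N \<times> cycV m) (Qop f) (\<lambda>(u, l). if (u, l) \<in> cubeV N \<times> cycV m then delta0 l * x u else 0)))^2"]
    by simp
qed

lemma S3_norm:
  assumes "f \<in> tens (eigsp (cubeV N) (cubeE N) (2 * real K)) (eigsp (cycV m) (cycE m) 0)"
  shows "(1 / real m) * norm2_l2 (cubeV N \<times> cycV m) (Qop f) =
          (\<Sum>\<nu>\<in>{1..N choose K}.
             (cmod (inner_l2 (cubeV N \<times> cycV m) (Qop f) (F3 \<nu>)))^2)"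
proof -
  have sl: "(\<lambda>u. f (u, 0)) \<in> cv.span (\<psi> K ` {1..N choose K})"
    using slice_tens[OF _ assms] \<psi>_span[of K] KN cv.subspace_span by (metis less_imp_le)
  have "(\<Sum>i\<in>{1..N choose K}. (cmod (inner_l2 (cubeV N \<times> cycV m) (Qop f) (\<lambda>(u, l). if (u, l) \<in> cubeV N \<times> cycV m then (\<lambda>_. 1 / complex_of_real (sqrt (real m))) l * \<psi> K i u else 0)))^2)
      = (cmod ((\<lambda>_. 1 / complex_of_real (sqrt (real m))) (0::int)))^2 * norm2_l2 (cubeV N \<times> cycV m) (Qop f)"
    by (rule normQ[OF cubeV_fin cycV_fin _ _ \<psi>_orth sl]) (use m0 KN in \<open>simp_all add: cycV_def\<close>)
  moreover have "(\<lambda>(u, l). if (u, l) \<in> cubeV N \<times> cycV m then (\<lambda>_. 1 / complex_of_real (sqrt (real m))) l * \<psi> K i u else 0) = F3 i" for i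
    by (auto simp: F3_def fun_eq_iff)
  moreover have "(cmod (1 / complex_of_real (sqrt (real m))))^2 = 1 / real m"
    by (simp add: norm_divide power_divide)
  ultimately show ?thesis by simp
qed

end

lemma poly_vanish:
  fixes a :: "nat \<Rightarrow> complex"
  assumes Z: "finite Z" "card Z > d" and van: "\<And>z. z \<in> Z \<Longrightarrow> (\<Sum>n\<le>d. a n * z ^ n) = 0"
  shows "\<forall>n\<le>d. a n = 0"
proof -
  define p where "p = (\<Sum>n\<le>d. monom (a n) n)"
  have cp: "coeff p i = (if i \<le> d then a i else 0)" for i
    by (simp add: p_def coeff_sum coeff_monom)
  have pp: "poly p z = (\<Sum>n\<le>d. a n * z ^ n)" for z
    by (simp add: p_def poly_sum poly_monom)
  have "p = 0"
  proof (rule ccontr)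
    assume p0: "p \<noteq> 0"
    have "Z \<subseteq> {x. poly p x = 0}" using van pp by auto
    then have "card Z \<le> card {x. poly p x = 0}" using card_mono[OF poly_roots_finite[OF p0]] by blast
    also have "\<dots> \<le> degree p" by (rule card_poly_roots_bound[OF p0])
    also have "\<dots> \<le> d" by (rule degree_le) (simp add: cp)
    finally show False using Z by simp
  qed
  then show ?thesis using cp by (metis coeff_0)
qed

lemma ex_mult_pow: "ex m k (a * int n) = (ex m k a) ^ n"
proof (induction n)
  case (Suc n)
  have "a * int (Suc n) = a * int n + a" by (simp add: algebra_simps)
  then show ?case using Suc by (simp add: ex_add)
qed simp

lemma ex_swap: "ex m k l = ex m (k * l) 1"
  by (simp add: ex_def algebra_simps)

lemma Dir_ex: "Dir m n l = (\<Sum>k\<in>{-int n..int n}. ex m k l)"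
  by (simp add: Dir_def ex_def)

context setup4
begin

context
  fixes m' :: nat
  assumes m'0: "0 < m'" and mm: "m = 4 * m' + 1"
begin

definition Km :: "int set" where "Km = {- int m'..int m'}"
definition Jst :: "int set" where "Jst = {0..(int m - 1) div 2}"
definition B2 :: "nat set" where "B2 = {1..N choose (K - 1)}"
definition Dc :: "int \<Rightarrow> int \<Rightarrow> complex" where
  "Dc j = (\<lambda>l. if l \<in> cycV m then Dbar m m' (l - 2 * j) else 0)"
definition F2 where
  "F2 = (\<lambda>(j, \<nu>). \<lambda>(u, l). if (u, l) \<in> cubeV N \<times> cycV m then Dbar m m' (l - 2 * j) * \<psi> (K - 1) \<nu> u else 0)"
definition coef :: "int \<Rightarrow> int \<Rightarrow> complex" where
  "coef j k = ex m k (- (2 * j)) / complex_of_real (sqrt (2 * real m' + 1))"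

lemma Jst_eq: "Jst = {0..2 * int m'}"
proof -
  have "(int m - 1) div 2 = 2 * int m'" using mm by simp
  then show ?thesis unfolding Jst_def by simp
qed

lemma Km_fin [simp]: "finite Km" and Jst_fin [simp]: "finite Jst" and B2_fin [simp]: "finite B2"
  by (simp_all add: Km_def Jst_def B2_def)

lemma card_Km: "card Km = 2 * m' + 1"
  by (simp add: Km_def card_atLeastAtMost_int)

lemma card_Jst: "card Jst = 2 * m' + 1"
  by (simp add: Jst_eq card_atLeastAtMost_int)

lemma Dc_lc: "Dc j = lc (coef j) (ecyc m) Km"
proof
  fix l
  show "Dc j l = lc (coef j) (ecyc m) Km l"
  proof (cases "l \<in> cycV m")
    case False then show ?thesis by (simp add: Dc_def lc_def ecyc_def)
  next
    case True
    have s: "complex_of_real (sqrt (real m * (2 * real m' + 1)))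
        = complex_of_real (sqrt (real m)) * complex_of_real (sqrt (2 * real m' + 1))"
      by (simp add: real_sqrt_mult)
    have "Dc j l = (\<Sum>k\<in>Km. ex m k (l - 2 * j)) / (complex_of_real (sqrt (real m)) * complex_of_real (sqrt (2 * real m' + 1)))"
      using True by (simp add: Dc_def Dbar_def Dir_ex Km_def s)
    also have "\<dots> = (\<Sum>k\<in>Km. coef j k * ecyc m k l)"
      using True by (simp add: sum_divide_distrib coef_def ecyc_def ex_diff mult.commute)
    finally show ?thesis by (simp add: lc_def)
  qed
qed

lemma orthon_Km: "orthon (cycV m) (ecyc m) Km"
  unfolding orthon_def
proof (intro ballI)
  fix k k' assume k: "k \<in> Km" "k' \<in> Km"
  have "int m dvd (k - k') \<longleftrightarrow> k = k'"
  proof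
    assume d: "int m dvd (k - k')"
    show "k = k'"
    proof (rule ccontr)
      assume "k \<noteq> k'"
      then have "\<bar>int m\<bar> \<le> \<bar>k - k'\<bar>" using dvd_imp_le_int[of "k - k'" "int m"] d by simp
      then show False using k mm by (auto simp: Km_def)
    qed
  qed simp
  then show "inner_l2 (cycV m) (ecyc m k) (ecyc m k') = (if k = k' then 1 else 0)"
    using ecyc_inner[OF m0] by simp
qed

lemma Dc_inner: "k \<in> Km \<Longrightarrow> inner_l2 (cycV m) (Dc j) (ecyc m k) = coef j k"
  unfolding Dc_lc by (rule orthon_coeff[OF Km_fin orthon_Km])

lemma lamc_Km: assumes "k \<in> Km" shows "lamc m k \<le> 2"
proof -
  have m0': "real m > 0" using m0 by simp
  have "\<bar>4 * k\<bar> \<le> int m" using assms mm by (auto simp: Km_def)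
  then have "real_of_int \<bar>4 * k\<bar> \<le> real_of_int (int m)" by (simp only: of_int_le_iff)
  then have "\<bar>4 * real_of_int k\<bar> \<le> real m" by simp
  then have t: "\<bar>4 * real_of_int k / real m\<bar> \<le> 1"
    using m0' by (simp add: abs_divide divide_le_eq)
  then have t2: "4 * real_of_int k / real m \<le> 1" "-1 \<le> 4 * real_of_int k / real m"
    by (simp_all only: abs_le_iff) linarith+
  have e: "2 * pi * real_of_int k / real m = (pi / 2) * (4 * real_of_int k / real m)" by simp
  have "- (pi / 2) \<le> 2 * pi * real_of_int k / real m \<and> 2 * pi * real_of_int k / real m \<le> pi / 2"
  proof -
    have "(pi / 2) * (4 * real_of_int k / real m) \<le> (pi / 2) * 1"
      by (rule mult_left_mono) (use t2 in auto)
    moreover have "(pi / 2) * (-1) \<le> (pi / 2) * (4 * real_of_int k / real m)"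
      by (rule mult_left_mono) (use t2 in auto)
    ultimately show ?thesis unfolding e by simp
  qed
  then have "0 \<le> cos (2 * pi * real_of_int k / real m)" using cos_ge_zero by blast
  then show ?thesis by (simp add: lamc_def)
qed

lemma ecyc_gen: "k \<in> Km \<Longrightarrow> ecyc m k \<in> {f \<in> l2 (cycV m). f \<noteq> 0 \<and> (\<exists>mu::real. mu \<le> 2 \<and> Lap (cycV m) (cycE m) f = fscale (complex_of_real mu) f)}"
proof -
  assume k: "k \<in> Km"
  have "ecyc m k 0 \<noteq> 0" using m0 by (simp add: ecyc_def cycV_def)
  then have "ecyc m k \<noteq> 0" by auto
  then show ?thesis using ecyc_l2 ecyc_eig[OF m3] lamc_Km[OF k] by blast
qed

lemma Dc_PW: "Dc j \<in> PW (cycV m) (cycE m) 2"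
proof -
  have "Dc j \<in> cv.span (ecyc m ` Km)" unfolding Dc_lc by (rule lc_in_span) simp
  also have "\<dots> \<subseteq> PW (cycV m) (cycE m) 2" unfolding PW_def
    by (rule cv.span_mono) (use ecyc_gen in auto)
  finally show ?thesis .
qed

lemma \<psi>K1_eig: "\<nu> \<in> B2 \<Longrightarrow> \<psi> (K - 1) \<nu> \<in> eigsp (cubeV N) (cubeE N) (2 * real K - 2)"
proof -
  assume \<nu>: "\<nu> \<in> B2"
  have k: "2 * real K - 2 = 2 * real (K - 1)" using K0 by (simp add: of_nat_diff)
  show ?thesis unfolding k \<psi>_span[of "K - 1", symmetric, OF _] using KN \<nu>
    by (auto simp: B2_def \<psi>_span[symmetric] intro: cv.span_base)
qed

lemma F2_tensor: "\<nu> \<in> B2 \<Longrightarrow> F2 (j, \<nu>) = tensor (\<psi> (K - 1) \<nu>) (Dc j)"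
proof (rule ext, clarify)
  fix u l assume \<nu>: "\<nu> \<in> B2"
  show "F2 (j, \<nu>) (u, l) = tensor (\<psi> (K - 1) \<nu>) (Dc j) (u, l)"
    using \<psi>_zero[of "K - 1" \<nu> u] \<nu> KN by (auto simp: F2_def tensor_def Dc_def B2_def)
qed

abbreviation "S2s \<equiv> tens (eigsp (cubeV N) (cubeE N) (2 * real K - 2)) (PW (cycV m) (cycE m) 2)"

lemma F2_in: "\<nu> \<in> B2 \<Longrightarrow> F2 (j, \<nu>) \<in> S2s"
  unfolding F2_tensor tens_def tensor_def
  by (rule cv.span_base) (use \<psi>K1_eig Dc_PW in blast)


lemma z_inj: "inj_on (\<lambda>k. ex m k (-2)) Km"
proof (rule inj_onI)
  fix k k' assume k: "k \<in> Km" "k' \<in> Km" and eq: "ex m k (-2) = ex m k' (-2)"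
  have "ex m k' (-2) * cnj (ex m k (-2)) = 1"
    using eq by (simp add: complex_norm_square[symmetric])
  then have "ex m (k' - k) (-2) = 1" by (simp add: ex_mult_cnj)
  then have "ex m (2 * (k - k')) 1 = 1" by (subst (asm) ex_swap) (simp add: algebra_simps)
  then have "int m dvd (2 * (k - k'))" using ex_one_eq_1[OF m0] by simp
  moreover have "coprime (int m) 2" using mm by simp
  ultimately have d: "int m dvd (k - k')" using coprime_dvd_mult_right_iff by blast
  show "k = k'"
  proof (rule ccontr)
    assume "k \<noteq> k'"
    then have "\<bar>int m\<bar> \<le> \<bar>k - k'\<bar>" using dvd_imp_le_int[of "k - k'" "int m"] d by simp
    then show False using k mm by (auto simp: Km_def)
  qed
qed

lemma F2_inner:
  assumes "\<nu> \<in> B2" "\<nu>0 \<in> B2" "k \<in> Km"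
  shows "inner_l2 (cubeV N \<times> cycV m) (F2 (j, \<nu>)) (tensor (\<psi> (K - 1) \<nu>0) (ecyc m k)) = (if \<nu> = \<nu>0 then coef j k else 0)"
proof -
  have o: "orthon (cubeV N) (\<psi> (K - 1)) B2" unfolding B2_def by (rule \<psi>_orth) (use KN in simp)
  show ?thesis
    using assms o unfolding F2_tensor[OF assms(1)]
    by (simp add: inner_tensor Dc_inner orthon_def)
qed

lemma F2_coeffs_zero:
  assumes z: "lc c F2 (Jst \<times> B2) = 0" and p: "p \<in> Jst \<times> B2"
  shows "c p = 0"
proof -
  obtain j0 \<nu>0 where p': "p = (j0, \<nu>0)" by (cases p) blast
  have j0: "j0 \<in> Jst" and \<nu>0: "\<nu>0 \<in> B2" using p by (auto simp: p')
  let ?s = "complex_of_real (sqrt (2 * real m' + 1))"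
  have s0: "?s \<noteq> 0" by simp
  have van: "(\<Sum>n\<le>2 * m'. c (int n, \<nu>0) * z ^ n) = 0" if zZ: "z \<in> (\<lambda>k. ex m k (-2)) ` Km" for z
  proof -
    obtain k where k: "k \<in> Km" and zk: "z = ex m k (-2)" using zZ by auto
    have "0 = inner_l2 (cubeV N \<times> cycV m) (lc c F2 (Jst \<times> B2)) (tensor (\<psi> (K - 1) \<nu>0) (ecyc m k))"
      using z by (simp add: inner_l2_def)
    also have "\<dots> = (\<Sum>q\<in>Jst \<times> B2. c q * inner_l2 (cubeV N \<times> cycV m) (F2 q) (tensor (\<psi> (K - 1) \<nu>0) (ecyc m k)))"
      by (rule inner_lc_left) simp
    also have "\<dots> = (\<Sum>q\<in>Jst \<times> B2. c q * (if snd q = \<nu>0 then coef (fst q) k else 0))"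
    proof (rule sum.cong[OF refl])
      fix q assume "q \<in> Jst \<times> B2"
      then obtain a b where q: "q = (a, b)" "b \<in> B2" by auto
      show "c q * inner_l2 (cubeV N \<times> cycV m) (F2 q) (tensor (\<psi> (K - 1) \<nu>0) (ecyc m k))
          = c q * (if snd q = \<nu>0 then coef (fst q) k else 0)"
        unfolding q(1) F2_inner[OF q(2) \<nu>0 k] by simp
    qed
    also have "\<dots> = (\<Sum>j\<in>Jst. \<Sum>\<nu>\<in>B2. c (j, \<nu>) * (if \<nu> = \<nu>0 then coef j k else 0))"
      by (simp only: sum_prod_split fst_conv snd_conv)
    also have "\<dots> = (\<Sum>j\<in>Jst. c (j, \<nu>0) * coef j k)"
      using \<nu>0 by (simp add: if_distrib cong: if_cong)
    also have "\<dots> = (\<Sum>n\<le>2 * m'. c (int n, \<nu>0) * coef (int n) k)"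
    proof -
      have "Jst = int ` {..2 * m'}" unfolding Jst_eq atLeast0AtMost[symmetric] image_int_atLeastAtMost by simp
      then show ?thesis by (simp add: sum.reindex)
    qed
    also have "\<dots> = (\<Sum>n\<le>2 * m'. c (int n, \<nu>0) * z ^ n) / ?s"
    proof -
      have "coef (int n) k = z ^ n / ?s" for n
      proof -
        have "- (2 * int n) = (-2) * int n" by simp
        then show ?thesis unfolding coef_def zk by (simp only: ex_mult_pow)
      qed
      then show ?thesis by (simp add: sum_divide_distrib)
    qed
    finally show ?thesis using s0 by simp
  qed
  have "\<forall>n\<le>2 * m'. c (int n, \<nu>0) = 0"
    by (rule poly_vanish[OF _ _ van]) (simp_all add: card_image[OF z_inj] card_Km)
  moreover have "j0 = int (nat j0)" "nat j0 \<le> 2 * m'" using j0 by (auto simp: Jst_eq)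
  ultimately show ?thesis unfolding p' by metis
qed

lemma F2_inj: "inj_on F2 (Jst \<times> B2)"
proof (rule inj_onI, rule ccontr)
  fix p q assume p: "p \<in> Jst \<times> B2" and q: "q \<in> Jst \<times> B2" and eq: "F2 p = F2 q" and ne: "p \<noteq> q"
  define c where "c = (\<lambda>r. if r = p then (1::complex) else if r = q then -1 else 0)"
  have "lc c F2 (Jst \<times> B2) = F2 p - F2 q"
  proof
    fix x
    have "lc c F2 (Jst \<times> B2) x = (\<Sum>r\<in>Jst \<times> B2. (if r = p then F2 p x else 0) + (if r = q then - F2 q x else 0))"
      unfolding lc_def c_def by (intro sum.cong refl) (use ne in auto)
    also have "\<dots> = F2 p x - F2 q x" using p q by (simp add: sum.distrib)
    finally show "lc c F2 (Jst \<times> B2) x = (F2 p - F2 q) x" by simp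
  qed
  then have "lc c F2 (Jst \<times> B2) = 0" using eq by simp
  then have "c p = 0" using F2_coeffs_zero p by blast
  then show False by (simp add: c_def)
qed

lemma F2_indep: "cv.independent (F2 ` (Jst \<times> B2))"
proof (rule cv.independent_if_scalars_zero)
  show "finite (F2 ` (Jst \<times> B2))" by simp
  fix f x assume s: "(\<Sum>x\<in>F2 ` (Jst \<times> B2). fscale (f x) x) = 0" and x: "x \<in> F2 ` (Jst \<times> B2)"
  have "(\<Sum>x\<in>F2 ` (Jst \<times> B2). fscale (f x) x) = (\<Sum>i\<in>Jst \<times> B2. fscale (f (F2 i)) (F2 i))"
    using F2_inj by (simp add: sum.reindex)
  then have "lc (\<lambda>i. f (F2 i)) F2 (Jst \<times> B2) = 0" using s by (simp add: sum_fscale)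
  then show "f x = 0" using x F2_coeffs_zero by auto
qed

lemma card_Kc2: "card Kc2 \<le> 2 * m' + 1"
proof -
  have sub: "Kc2 \<subseteq> {0..int m'} \<union> {3 * int m' + 1..<int m}"
  proof
    fix k assume k: "k \<in> Kc2"
    then have k0: "0 \<le> k" "k < int m" and le: "lamc m k \<le> 2" by (auto simp: Kc2_def)
    show "k \<in> {0..int m'} \<union> {3 * int m' + 1..<int m}"
    proof (rule ccontr)
      assume "k \<notin> {0..int m'} \<union> {3 * int m' + 1..<int m}"
      then have kr: "int m' + 1 \<le> k" "k \<le> 3 * int m'" using k0 by auto
      have m0': "real m > 0" using m0 by simp
      have "4 * k > int m" "4 * k < 3 * int m" using kr mm by auto
      then have "real_of_int (4 * k) > real_of_int (int m)" "real_of_int (4 * k) < real_of_int (3 * int m)"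
        by (simp_all only: of_int_less_iff)
      then have t: "1 < 4 * real_of_int k / real m" "4 * real_of_int k / real m < 3"
        using m0' by (simp_all add: divide_less_eq less_divide_eq)
      have e: "2 * pi * real_of_int k / real m = (pi / 2) * (4 * real_of_int k / real m)" by simp
      have "(pi / 2) * 1 < (pi / 2) * (4 * real_of_int k / real m)"
        by (rule mult_strict_left_mono) (use t in auto)
      moreover have "(pi / 2) * (4 * real_of_int k / real m) < (pi / 2) * 3"
        by (rule mult_strict_left_mono) (use t in auto)
      ultimately have "cos (2 * pi * real_of_int k / real m) < 0"
        unfolding e by (intro cos_lt_zero_pi) auto
      then show False using le by (simp add: lamc_def)
    qed
  qed
  have "card Kc2 \<le> card ({0..int m'} \<union> {3 * int m' + 1..<int m})"
    by (rule card_mono[OF _ sub]) simp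
  also have "\<dots> \<le> card {0..int m'} + card {3 * int m' + 1..<int m}" by (rule card_Un_le)
  also have "\<dots> = 2 * m' + 1" using mm by (simp add: card_atLeastAtMost_int card_atLeastLessThan_int) 
  finally show ?thesis .
qed

lemma card_F2: "card (F2 ` (Jst \<times> B2)) = (2 * m' + 1) * (N choose (K - 1))"
  using F2_inj by (simp add: card_image card_cartesian_product card_Jst B2_def)

lemma S2_span: "cv.span (F2 ` (Jst \<times> B2)) = S2s"
proof
  have sub: "F2 ` (Jst \<times> B2) \<subseteq> S2s" using F2_in by auto
  have subS: "cv.subspace S2s" unfolding tens_def by (rule cv.subspace_span)
  show "cv.span (F2 ` (Jst \<times> B2)) \<subseteq> S2s" by (rule cv.span_minimal[OF sub subS])
  show "S2s \<subseteq> cv.span (F2 ` (Jst \<times> B2))"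
  proof (rule cv.indep_spans[of "bp ` J2"])
    show "finite (bp ` J2)" by simp
    show "S2s \<subseteq> cv.span (bp ` J2)" using S2_eq by simp
    show "F2 ` (Jst \<times> B2) \<subseteq> S2s" by (rule sub)
    show "cv.independent (F2 ` (Jst \<times> B2))" by (rule F2_indep)
    show "finite (F2 ` (Jst \<times> B2))" by simp
    have "card (bp ` J2) \<le> card J2" by (rule card_image_le) simp
    also have "\<dots> = (N choose (K - 1)) * card Kc2" by (simp add: J2_def card_cartesian_product)
    also have "\<dots> \<le> (N choose (K - 1)) * (2 * m' + 1)" by (rule mult_le_mono2[OF card_Kc2])
    also have "\<dots> = card (F2 ` (Jst \<times> B2))" by (simp add: card_F2)
    finally show "card (bp ` J2) \<le> card (F2 ` (Jst \<times> B2))" .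
  qed
qed

lemma S2_dim: "cdim S2s = ((m + 1) div 2) * (N choose (K - 1))"
proof -
  have "cdim S2s = card (F2 ` (Jst \<times> B2))"
    unfolding S2_span[symmetric] by (rule cv.dim_span_eq_card_independent[OF F2_indep])
  also have "\<dots> = ((m + 1) div 2) * (N choose (K - 1))"
  proof -
    have "(m + 1) div 2 = 2 * m' + 1" using mm by simp
    then show ?thesis by (simp only: card_F2)
  qed
  finally show ?thesis .
qed

lemma S2_basis: "is_basis S2s F2 (Jst \<times> B2)"
  unfolding is_basis_def
proof (intro conjI allI impI ballI)
  fix c i assume "(\<Sum>i\<in>Jst \<times> B2. fscale (c i) (F2 i)) = 0" "i \<in> Jst \<times> B2"
  then show "c i = 0" using F2_coeffs_zero by (simp add: sum_fscale)
next
  show "cv.span (F2 ` (Jst \<times> B2)) = S2s" by (rule S2_span)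
qed

lemma Dbar0: "(cmod (Dbar m m' 0))^2 = 1/2 + 1 / (2 * real m)"
proof -
  have "Dir m m' 0 = of_nat (2 * m' + 1)" by (simp add: Dir_ex card_Km[unfolded Km_def])
  then have "Dbar m m' 0 = complex_of_real ((2 * real m' + 1) / sqrt (real m * (2 * real m' + 1)))"
    by (simp add: Dbar_def)
  then have "(cmod (Dbar m m' 0))^2 = ((2 * real m' + 1) / sqrt (real m * (2 * real m' + 1)))^2"
    by (simp only: norm_of_real power2_abs)
  also have "\<dots> = (2 * real m' + 1)^2 / (real m * (2 * real m' + 1))"
    by (simp add: power_divide)
  also have "\<dots> = (2 * real m' + 1) / real m"
    by (simp add: power2_eq_square)
  also have "\<dots> = 1/2 + 1 / (2 * real m)"
  proof -
    have rm: "real m = 4 * real m' + 1" using mm by simp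
    show ?thesis unfolding rm by (simp add: field_simps)
  qed
  finally show ?thesis .
qed

lemma S2_norm:
  assumes "f \<in> S2s"
  shows "(1/2 + 1 / (2 * real m)) * norm2_l2 (cubeV N \<times> cycV m) (Qop f) =
          (\<Sum>\<nu>\<in>{1..N choose (K - 1)}.
             (cmod (inner_l2 (cubeV N \<times> cycV m) (Qop f)
                (\<lambda>(u, l). if (u, l) \<in> cubeV N \<times> cycV m then Dbar m m' l * \<psi> (K - 1) \<nu> u else 0)))^2)"
proof -
  have k: "2 * real K - 2 = 2 * real (K - 1)" using K0 by (simp add: of_nat_diff)
  have e: "eigsp (cubeV N) (cubeE N) (2 * real K - 2) = cv.span (\<psi> (K - 1) ` {1..N choose (K - 1)})"
    unfolding k using \<psi>_span[of "K - 1"] KN by simp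
  have sl: "(\<lambda>u. f (u, 0)) \<in> cv.span (\<psi> (K - 1) ` {1..N choose (K - 1)})"
    using slice_tens[OF _ assms] e cv.subspace_span by metis
  have "(\<Sum>i\<in>{1..N choose (K - 1)}. (cmod (inner_l2 (cubeV N \<times> cycV m) (Qop f) (\<lambda>(u, l). if (u, l) \<in> cubeV N \<times> cycV m then Dbar m m' l * \<psi> (K - 1) i u else 0)))^2)
      = (cmod (Dbar m m' 0))^2 * norm2_l2 (cubeV N \<times> cycV m) (Qop f)"
    by (rule normQ[OF cubeV_fin cycV_fin _ _ \<psi>_orth sl]) (use m0 KN in \<open>simp_all add: cycV_def\<close>)
  then show ?thesis by (simp add: Dbar0)
qed

end

end

theorem theorem4:
  fixes N m K :: nat
    and \<psi> :: "nat \<Rightarrow> nat \<Rightarrow> (nat \<Rightarrow> bool) \<Rightarrow> complex"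
  assumes "N \<ge> 2" and "m \<ge> 3" and "0 < K" and "K < N"
    and \<psi>_onb: "\<And>\<kappa>. \<kappa> \<le> N \<Longrightarrow>
       is_onb (cubeV N) (eigsp (cubeV N) (cubeE N) (2 * real \<kappa>)) (\<psi> \<kappa>) {1..N choose \<kappa>}"
  defines "V \<equiv> prodV (cubeV N) (cycV m)"
    and "E \<equiv> prodE (cubeE N) (cycE m)"
    and "S1 \<equiv> tens (PW (cubeV N) (cubeE N) (2 * real K - 4)) (l2 (cycV m))"
    and "S2 \<equiv> tens (eigsp (cubeV N) (cubeE N) (2 * real K - 2)) (PW (cycV m) (cycE m) 2)"
    and "S3 \<equiv> tens (eigsp (cubeV N) (cubeE N) (2 * real K)) (eigsp (cycV m) (cycE m) 0)"
  shows
    "PW V E (2 * real K) = {a + b + c | a b c. a \<in> S1 \<and> b \<in> S2 \<and> c \<in> S3}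
     \<and> (\<forall>a\<in>S1. \<forall>b\<in>S2. inner_l2 V a b = 0)
     \<and> (\<forall>a\<in>S1. \<forall>c\<in>S3. inner_l2 V a c = 0)
     \<and> (\<forall>b\<in>S2. \<forall>c\<in>S3. inner_l2 V b c = 0)
     \<and> cdim S1 = m * (\<Sum>\<kappa><K - 1. N choose \<kappa>)
     \<and> is_onb V S1
         (\<lambda>(j, \<kappa>, \<nu>). \<lambda>(u, l). if (u, l) \<in> V then delta0 ((l - j) mod int m) * \<psi> \<kappa> \<nu> u else 0)
         ({0..<int m} \<times> (SIGMA \<kappa>:{..<K - 1}. {1..N choose \<kappa>}))
     \<and> (\<forall>f\<in>S1. norm2_l2 V (Qop f) =
          (\<Sum>\<kappa><K - 1. \<Sum>\<nu>\<in>{1..N choose \<kappa>}.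
             (cmod (inner_l2 V (Qop f)
                (\<lambda>(u, l). if (u, l) \<in> V then delta0 l * \<psi> \<kappa> \<nu> u else 0)))^2))
     \<and> (\<forall>m'::nat. 0 < m' \<and> m = 4 * m' + 1 \<longrightarrow>
          cdim S2 = ((m + 1) div 2) * (N choose (K - 1))
          \<and> is_basis S2
              (\<lambda>(j, \<nu>). \<lambda>(u, l). if (u, l) \<in> V then Dbar m m' (l - 2 * j) * \<psi> (K - 1) \<nu> u else 0)
              ({0..(int m - 1) div 2} \<times> {1..N choose (K - 1)})
          \<and> (\<forall>f\<in>S2. (1/2 + 1 / (2 * real m)) * norm2_l2 V (Qop f) =
               (\<Sum>\<nu>\<in>{1..N choose (K - 1)}.
                  (cmod (inner_l2 V (Qop f)
                     (\<lambda>(u, l). if (u, l) \<in> V then Dbar m m' l * \<psi> (K - 1) \<nu> u else 0)))^2)))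
     \<and> cdim S3 = N choose K
     \<and> is_onb V S3
         (\<lambda>\<nu>. \<lambda>(u, l). if (u, l) \<in> V then \<psi> K \<nu> u / complex_of_real (sqrt (real m)) else 0)
         {1..N choose K}
     \<and> (\<forall>f\<in>S3. (1 / real m) * norm2_l2 V (Qop f) =
          (\<Sum>\<nu>\<in>{1..N choose K}.
             (cmod (inner_l2 V (Qop f)
                (\<lambda>(u, l). if (u, l) \<in> V then \<psi> K \<nu> u / complex_of_real (sqrt (real m)) else 0)))^2))"
proof -
  interpret setup4 N m K \<psi>
    by unfold_locales (use assms \<psi>_onb in auto)
  have V: "V = cubeV N \<times> cycV m" by (simp add: V_def prodV_def)
  have E: "E = prodE (cubeE N) (cycE m)" by (simp add: E_def)
  have S1: "S1 = cv.span (bp ` J1)" unfolding S1_def by (rule S1_eq)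
  have S2: "S2 = cv.span (bp ` J2)" unfolding S2_def by (rule S2_eq)
  have S3: "S3 = cv.span (bp ` J3)" unfolding S3_def by (rule S3_eq)
  have c1: "PW V E (2 * real K) = {a + b + c | a b c. a \<in> S1 \<and> b \<in> S2 \<and> c \<in> S3}"
  proof -
    have "PW V E (2 * real K) = cv.span (bp ` (J1 \<union> J2 \<union> J3))"
      unfolding V E PW_prod J_split ..
    also have "\<dots> = cv.span (bp ` J1 \<union> bp ` J2 \<union> bp ` J3)" by (simp add: image_Un)
    also have "\<dots> = {a + b + c | a b c. a \<in> S1 \<and> b \<in> S2 \<and> c \<in> S3}"
      unfolding span_Un3 S1 S2 S3 ..
    finally show ?thesis .
  qed
  have c2: "\<forall>a\<in>S1. \<forall>b\<in>S2. inner_l2 V a b = 0"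
    unfolding V S1 S2 using orth_J[OF J_sub(1) J_sub(2) J_disj(1)] by blast
  have c3: "\<forall>a\<in>S1. \<forall>c\<in>S3. inner_l2 V a c = 0"
    unfolding V S1 S3 using orth_J[OF J_sub(1) J_sub(3) J_disj(2)] by blast
  have c4: "\<forall>b\<in>S2. \<forall>c\<in>S3. inner_l2 V b c = 0"
    unfolding V S2 S3 using orth_J[OF J_sub(2) J_sub(3) J_disj(3)] by blast
  have c5: "cdim S1 = m * (\<Sum>\<kappa><K - 1. N choose \<kappa>)"
    unfolding S1 dim_J[OF J_sub(1)] by (simp add: J1_def I1_def card_cartesian_product card_SigmaI)
  have c6: "is_onb V S1
         (\<lambda>(j, \<kappa>, \<nu>). \<lambda>(u, l). if (u, l) \<in> V then delta0 ((l - j) mod int m) * \<psi> \<kappa> \<nu> u else 0)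
         ({0..<int m} \<times> (SIGMA \<kappa>:{..<K - 1}. {1..N choose \<kappa>}))"
  proof -
    have i: "{0..<int m} \<times> (SIGMA \<kappa>:{..<K - 1}. {1..N choose \<kappa>}) = cycV m \<times> I1"
      by (simp add: cycV_def I1_def)
    have f: "(\<lambda>(j, \<kappa>, \<nu>). \<lambda>(u, l). if (u, l) \<in> cubeV N \<times> cycV m then delta0 ((l - j) mod int m) * \<psi> \<kappa> \<nu> u else 0) = F1"
      by (simp add: F1_def)
    show ?thesis unfolding V S1_def unfolding i f by (rule S1_onb)
  qed
  have c7: "\<forall>f\<in>S1. norm2_l2 V (Qop f) =
          (\<Sum>\<kappa><K - 1. \<Sum>\<nu>\<in>{1..N choose \<kappa>}.
             (cmod (inner_l2 V (Qop f)
                (\<lambda>(u, l). if (u, l) \<in> V then delta0 l * \<psi> \<kappa> \<nu> u else 0)))^2)"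
    unfolding V S1_def using S1_norm by blast
  have c8: "\<forall>m'::nat. 0 < m' \<and> m = 4 * m' + 1 \<longrightarrow>
          cdim S2 = ((m + 1) div 2) * (N choose (K - 1))
          \<and> is_basis S2
              (\<lambda>(j, \<nu>). \<lambda>(u, l). if (u, l) \<in> V then Dbar m m' (l - 2 * j) * \<psi> (K - 1) \<nu> u else 0)
              ({0..(int m - 1) div 2} \<times> {1..N choose (K - 1)})
          \<and> (\<forall>f\<in>S2. (1/2 + 1 / (2 * real m)) * norm2_l2 V (Qop f) =
               (\<Sum>\<nu>\<in>{1..N choose (K - 1)}.
                  (cmod (inner_l2 V (Qop f)
                     (\<lambda>(u, l). if (u, l) \<in> V then Dbar m m' l * \<psi> (K - 1) \<nu> u else 0)))^2))"
  proof (intro allI impI)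
    fix m' :: nat assume h: "0 < m' \<and> m = 4 * m' + 1"
    then have h1: "0 < m'" and h2: "m = 4 * m' + 1" by auto
    have b: "is_basis S2
              (\<lambda>(j, \<nu>). \<lambda>(u, l). if (u, l) \<in> V then Dbar m m' (l - 2 * j) * \<psi> (K - 1) \<nu> u else 0)
              ({0..(int m - 1) div 2} \<times> {1..N choose (K - 1)})"
      using S2_basis[OF h1 h2] unfolding S2_def V F2_def[OF h1 h2] Jst_def[OF h1 h2] B2_def[OF h1 h2] .
    show "cdim S2 = ((m + 1) div 2) * (N choose (K - 1))
          \<and> is_basis S2
              (\<lambda>(j, \<nu>). \<lambda>(u, l). if (u, l) \<in> V then Dbar m m' (l - 2 * j) * \<psi> (K - 1) \<nu> u else 0)
              ({0..(int m - 1) div 2} \<times> {1..N choose (K - 1)})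
          \<and> (\<forall>f\<in>S2. (1/2 + 1 / (2 * real m)) * norm2_l2 V (Qop f) =
               (\<Sum>\<nu>\<in>{1..N choose (K - 1)}.
                  (cmod (inner_l2 V (Qop f)
                     (\<lambda>(u, l). if (u, l) \<in> V then Dbar m m' l * \<psi> (K - 1) \<nu> u else 0)))^2))"
      using S2_dim[OF h1 h2] b S2_norm[OF h1 h2] unfolding S2_def V by blast
  qed
  have c9: "cdim S3 = N choose K"
    unfolding S3 dim_J[OF J_sub(3)] by (simp add: J3_def card_cartesian_product)
  have c10: "is_onb V S3
         (\<lambda>\<nu>. \<lambda>(u, l). if (u, l) \<in> V then \<psi> K \<nu> u / complex_of_real (sqrt (real m)) else 0)
         {1..N choose K}"
    using S3_onb unfolding S3_def V F3_def .
  have c11: "\<forall>f\<in>S3. (1 / real m) * norm2_l2 V (Qop f) =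
          (\<Sum>\<nu>\<in>{1..N choose K}.
             (cmod (inner_l2 V (Qop f)
                (\<lambda>(u, l). if (u, l) \<in> V then \<psi> K \<nu> u / complex_of_real (sqrt (real m)) else 0)))^2)"
    using S3_norm unfolding S3_def V F3_def by blast
  show ?thesis using c1 c2 c3 c4 c5 c6 c7 c8 c9 c10 c11 by blast
qed

end
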